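(* In the LHARG setting with stochastic discount factor and risk-neutral measure $\mathbb{Q}$ as described in the context (with parameters $\nu_1,\nu_2\in\mathbb{R}$), fix integers $t<T$ and $z\in\mathbb{R}$. Let $Y^*=-\nu_2\lambda-\nu_1+\tfrac12\nu_2^2$ and define backward recursively for $s=T-1,\dots,t$, with terminal conditions $A^*_T=0$, $B^*_{T,i}=0$, $C^*_{T,j}=0$: $$X^*_{s+1}=(z-\nu_2)\lambda+B^*_{s+1,1}-\nu_1+\frac{\tfrac12(z-\nu_2)^2+\gamma^2C^*_{s+1,1}-2C^*_{s+1,1}\gamma(z-\nu_2)}{1-2C^*_{s+1,1}},$$ $$A^*_s=A^*_{s+1}+zr-\tfrac12\ln(1-2C^*_{s+1,1})-\delta w(X^*_{s+1},\theta)+\delta w(Y^*,\theta)+d\,v(X^*_{s+1},\theta)-d\,v(Y^*,\theta),$$ $$B^*_{s,i}=B^*_{s+1,i+1}\mathbf{1}_{\{i\le p-1\}}+\big(v(X^*_{s+1},\theta)-v(Y^*,\theta)\big)\beta_i\ \ (1\le i\le p),$$ $$C^*_{s,j}=C^*_{s+1,j+1}\mathbf{1}_{\{j\le q-1\}}+\big(v(X^*_{s+1},\theta)-v(Y^*,\theta)\big)\alpha_j\ \ (1\le j\le q).$$ Assume $\theta Y^*<1$, and $1-2C^*_{s+1,1}>0$, $\theta X^*_{s+1}<1$ for all $s$. Then $$\varphi^{\mathbb{Q}}_{\nu_1\nu_2}(t,T,z):=\mathbb{E}^{\mathbb{Q}}\left[e^{zy_{t,T}}\mid\mathcal{F}_t\right]=\exp\Big(A^*_t+\sum_{i=1}^pB^*_{t,i}\mathrm{RV}_{t+1-i}+\sum_{j=1}^qC^*_{t,j}\ell_{t+1-j}\Big),$$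 where $y_{t,T}=\sum_{s=t+1}^Ty_s$.
   Context: LHARG setting. Discrete time. $(\epsilon_t)$ are i.i.d. $\mathcal{N}(0,1)$ under $\mathbb{P}$ and $(\mathrm{RV}_t)$ is a positive process (realized variance); $\mathcal{F}_t$ is the $\sigma$-algebra generated by $\{\epsilon_u,\mathrm{RV}_u:u\le t\}$. Parameters: $r\in\mathbb{R}$ (risk-free rate), $\lambda\in\mathbb{R}$, $\delta>0$, $\theta>0$, $d\ge0$, $\gamma\in\mathbb{R}$, integers $p,q\ge1$, $\beta_1,\dots,\beta_p\ge0$, $\alpha_1,\dots,\alpha_q\ge0$. Leverage: $\ell_t=(\epsilon_t-\gamma\sqrt{\mathrm{RV}_t})^2$. Log-returns: $y_{t+1}=\ln(S_{t+1}/S_t)=r+\lambda\mathrm{RV}_{t+1}+\sqrt{\mathrm{RV}_{t+1}}\,\epsilon_{t+1}$, with $\epsilon_{t+1}$ independent of $(\mathcal{F}_t,\mathrm{RV}_{t+1})$. Conditionally on $\mathcal{F}_t$, $\mathrm{RV}_{t+1}$ has the noncentral gamma law $\bar\gamma(\delta,\Theta_t,\theta)$ with $\Theta_t=d+\sum_{i=1}^p\beta_i\mathrm{RV}_{t+1-i}+\sum_{j=1}^q\alpha_j\ell_{t+1-j}$. Here $\bar\gamma(\delta,\Theta,\theta)$ (shape $\delta$, noncentrality $\Theta\ge0$, scale $\theta$) is the law of $\theta G$ where, conditionally on $N\sim\mathrm{Poisson}(\Theta)$, $G\sim\mathrm{Gamma}(\delta+N,1)$; for $X\sim\bar\gamma(\delta,\Theta,\theta)$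 and $\theta x<1$, $\mathbb{E}[e^{xX}]=\exp(-\delta w(x,\theta)+\Theta v(x,\theta))$, where $v(x,\theta)=\frac{\theta x}{1-\theta x}$ and $w(x,\theta)=\ln(1-\theta x)$. (In the heterogeneous LHARG model proper, $p=q=22$ with heterogeneous daily/weekly/monthly coefficient structure.) Stochastic discount factor: $M_{s,s+1}=e^{-\nu_1\mathrm{RV}_{s+1}-\nu_2y_{s+1}}/\mathbb{E}^{\mathbb{P}}[e^{-\nu_1\mathrm{RV}_{s+1}-\nu_2y_{s+1}}\mid\mathcal{F}_s]$; the measure $\mathbb{Q}$ is defined by $\mathbb{E}^{\mathbb{Q}}[X\mid\mathcal{F}_t]=\mathbb{E}^{\mathbb{P}}[M_{t,t+1}\cdots M_{T-1,T}X\mid\mathcal{F}_t]$ for $\mathcal{F}_T$-measurable $X$. *)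

theory Defs
  imports "HOL-Probability.Probability"
begin

definition vfun :: "real \<Rightarrow> real \<Rightarrow> real" where
  "vfun x \<theta> = \<theta> * x / (1 - \<theta> * x)"

definition wfun :: "real \<Rightarrow> real \<Rightarrow> real" where
  "wfun x \<theta> = ln (1 - \<theta> * x)"

definition gamma_scaled_density :: "real \<Rightarrow> real \<Rightarrow> real \<Rightarrow> real" where
  "gamma_scaled_density k \<theta> x =
     (if x > 0 then x powr (k - 1) * exp (- x / \<theta>) / (Gamma k * \<theta> powr k) else 0)"

text \<open>Noncentral gamma (shape delta, noncentrality Theta, scale theta): Poisson(Theta) mixture
  of the laws of theta*Gamma(delta+N,1).\<close>
definition ncgamma_density :: "real \<Rightarrow> real \<Rightarrow> real \<Rightarrow> real \<Rightarrow> real" where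
  "ncgamma_density \<delta> \<Theta> \<theta> x =
     (\<Sum>n. exp (- \<Theta>) * \<Theta> ^ n / fact n * gamma_scaled_density (\<delta> + real n) \<theta> x)"

definition ncgamma :: "real \<Rightarrow> real \<Rightarrow> real \<Rightarrow> real measure" where
  "ncgamma \<delta> \<Theta> \<theta> = density lborel (\<lambda>x. ennreal (ncgamma_density \<delta> \<Theta> \<theta> x))"

definition lev :: "real \<Rightarrow> (int \<Rightarrow> 'a \<Rightarrow> real) \<Rightarrow> (int \<Rightarrow> 'a \<Rightarrow> real) \<Rightarrow> int \<Rightarrow> 'a \<Rightarrow> real" where
  "lev \<gamma> eps RV t \<omega> = (eps t \<omega> - \<gamma> * sqrt (RV t \<omega>))\<^sup>2"

definition logret :: "real \<Rightarrow> real \<Rightarrow> (int \<Rightarrow> 'a \<Rightarrow> real) \<Rightarrow> (int \<Rightarrow> 'a \<Rightarrow> real) \<Rightarrow> int \<Rightarrow> 'a \<Rightarrow> real" where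
  "logret r lam eps RV s \<omega> = r + lam * RV s \<omega> + sqrt (RV s \<omega>) * eps s \<omega>"

definition Theta :: "real \<Rightarrow> nat \<Rightarrow> nat \<Rightarrow> (nat \<Rightarrow> real) \<Rightarrow> (nat \<Rightarrow> real) \<Rightarrow> real \<Rightarrow>
     (int \<Rightarrow> 'a \<Rightarrow> real) \<Rightarrow> (int \<Rightarrow> 'a \<Rightarrow> real) \<Rightarrow> int \<Rightarrow> 'a \<Rightarrow> real" where
  "Theta d p q \<beta> \<alpha> \<gamma> eps RV t \<omega> =
     d + (\<Sum>i=1..p. \<beta> i * RV (t + 1 - int i) \<omega>) + (\<Sum>j=1..q. \<alpha> j * lev \<gamma> eps RV (t + 1 - int j) \<omega>)"

definition gen_sets :: "'a measure \<Rightarrow> ('a \<Rightarrow> real) \<Rightarrow> 'a set set" where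
  "gen_sets M X = {X -` B \<inter> space M | B. B \<in> sets borel}"

definition filt :: "'a measure \<Rightarrow> (int \<Rightarrow> 'a \<Rightarrow> real) \<Rightarrow> (int \<Rightarrow> 'a \<Rightarrow> real) \<Rightarrow> int \<Rightarrow> 'a measure" where
  "filt M eps RV t = sigma (space M) (\<Union>u\<in>{..t}. gen_sets M (eps u) \<union> gen_sets M (RV u))"

definition filt_plus :: "'a measure \<Rightarrow> (int \<Rightarrow> 'a \<Rightarrow> real) \<Rightarrow> (int \<Rightarrow> 'a \<Rightarrow> real) \<Rightarrow> int \<Rightarrow> 'a measure" where
  "filt_plus M eps RV t = sigma (space M)
     ((\<Union>u\<in>{..t}. gen_sets M (eps u) \<union> gen_sets M (RV u)) \<union> gen_sets M (RV (t + 1)))"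

definition sdf :: "'a measure \<Rightarrow> real \<Rightarrow> real \<Rightarrow> real \<Rightarrow> real \<Rightarrow>
     (int \<Rightarrow> 'a \<Rightarrow> real) \<Rightarrow> (int \<Rightarrow> 'a \<Rightarrow> real) \<Rightarrow> int \<Rightarrow> 'a \<Rightarrow> real" where
  "sdf M r lam \<nu>1 \<nu>2 eps RV s \<omega> =
     exp (- \<nu>1 * RV (s + 1) \<omega> - \<nu>2 * logret r lam eps RV (s + 1) \<omega>) /
     real_cond_exp M (filt M eps RV s)
        (\<lambda>\<omega>'. exp (- \<nu>1 * RV (s + 1) \<omega>' - \<nu>2 * logret r lam eps RV (s + 1) \<omega>')) \<omega>"

text \<open>State after k backward steps from T, i.e. coefficients at time s = T - k.
  Components: (A*_s, B*_{s,.}, C*_{s,.}), with B, C indexed by 1..p resp. 1..q.\<close>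

definition Ystar :: "real \<Rightarrow> real \<Rightarrow> real \<Rightarrow> real" where
  "Ystar lam \<nu>1 \<nu>2 = - \<nu>2 * lam - \<nu>1 + 1/2 * \<nu>2\<^sup>2"

definition Xstar :: "real \<Rightarrow> real \<Rightarrow> real \<Rightarrow> real \<Rightarrow> real \<Rightarrow> real \<Rightarrow> real \<Rightarrow> real" where
  "Xstar lam \<gamma> \<nu>1 \<nu>2 z B1 C1 =
     (z - \<nu>2) * lam + B1 - \<nu>1 +
     (1/2 * (z - \<nu>2)\<^sup>2 + \<gamma>\<^sup>2 * C1 - 2 * C1 * \<gamma> * (z - \<nu>2)) / (1 - 2 * C1)"

fun coefs :: "real \<Rightarrow> real \<Rightarrow> real \<Rightarrow> real \<Rightarrow> real \<Rightarrow> real \<Rightarrow> nat \<Rightarrow> nat \<Rightarrow>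
     (nat \<Rightarrow> real) \<Rightarrow> (nat \<Rightarrow> real) \<Rightarrow> real \<Rightarrow> real \<Rightarrow> real \<Rightarrow> nat \<Rightarrow>
     real \<times> (nat \<Rightarrow> real) \<times> (nat \<Rightarrow> real)" where
  "coefs r lam \<delta> \<theta> d \<gamma> p q \<beta> \<alpha> \<nu>1 \<nu>2 z 0 = (0, (\<lambda>_. 0), (\<lambda>_. 0))"
| "coefs r lam \<delta> \<theta> d \<gamma> p q \<beta> \<alpha> \<nu>1 \<nu>2 z (Suc k) =
     (let (A, B, C) = coefs r lam \<delta> \<theta> d \<gamma> p q \<beta> \<alpha> \<nu>1 \<nu>2 z k;
          X = Xstar lam \<gamma> \<nu>1 \<nu>2 z (B 1) (C 1);
          Y = Ystar lam \<nu>1 \<nu>2;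
          D = vfun X \<theta> - vfun Y \<theta>
      in (A + z * r - 1/2 * ln (1 - 2 * C 1) - \<delta> * wfun X \<theta> + \<delta> * wfun Y \<theta>
            + d * vfun X \<theta> - d * vfun Y \<theta>,
          (\<lambda>i. if 1 \<le> i \<and> i \<le> p then (if i \<le> p - 1 then B (i + 1) else 0) + D * \<beta> i else 0),
          (\<lambda>j. if 1 \<le> j \<and> j \<le> q then (if j \<le> q - 1 then C (j + 1) else 0) + D * \<alpha> j else 0)))"

end

theory Submission
  imports Defs
begin

lemma gauss_mgf:
  fixes c b :: real
  assumes c: "c < 1/2"
  shows "(\<integral>\<^sup>+e. ennreal (std_normal_density e * exp (c*e\<^sup>2 + b*e)) \<partial>lborel)
         = ennreal (exp (b\<^sup>2/(2*(1-2*c))) / sqrt (1-2*c))"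
proof -
  define sg where "sg = 1 / sqrt (1 - 2*c)"
  define m where "m = b / (1 - 2*c)"
  have pc: "1 - 2*c > 0" using c by simp
  have sg_pos: "sg > 0" unfolding sg_def using pc by simp
  have s2: "sg\<^sup>2 = 1/(1-2*c)" unfolding sg_def using pc by (simp add: power_divide)
  have eq: "std_normal_density e * exp (c*e\<^sup>2 + b*e)
      = (exp (b\<^sup>2/(2*(1-2*c))) / sqrt (1-2*c)) * normal_density m sg e" for e
  proof -
    have "std_normal_density e * exp (c*e\<^sup>2 + b*e) = (1/sqrt(2*pi)) * exp (- e\<^sup>2/2 + (c*e\<^sup>2 + b*e))"
      by (simp add: std_normal_density_def flip: exp_add)
    also have "- e\<^sup>2/2 + (c*e\<^sup>2 + b*e) = b\<^sup>2/(2*(1-2*c)) + (-(e - m)\<^sup>2 / (2* sg\<^sup>2))"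
    proof -
      have "-(e - m)\<^sup>2 / (2 * sg\<^sup>2) = -(e - m)\<^sup>2 * (1-2*c) / 2" unfolding s2 using pc by simp
      moreover have "m * (1-2*c) = b" unfolding m_def using pc by simp
      ultimately show ?thesis using pc by (simp add: field_simps power2_eq_square) algebra
    qed
    also have "(1/sqrt(2*pi)) * exp (b\<^sup>2/(2*(1-2*c)) + (-(e - m)\<^sup>2 / (2* sg\<^sup>2)))
       = (exp (b\<^sup>2/(2*(1-2*c))) / sqrt (1-2*c)) * normal_density m sg e"
    proof -
      have nd: "normal_density m sg e = exp (-(e - m)\<^sup>2 / (2 * sg\<^sup>2)) / (sqrt (2*pi) * sg)"
        using sg_pos by (simp add: normal_density_def real_sqrt_mult)
      have gen: "(1/sqrt(2*pi)) * exp (B + Q) = (exp B / sqrt (1-2*c)) * (exp Q / (sqrt (2*pi) * sg))" for B Q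
        unfolding sg_def using pc by (simp add: exp_add)
      show ?thesis unfolding nd by (rule gen)
    qed
    finally show ?thesis .
  qed
  have "(\<integral>\<^sup>+e. ennreal (normal_density m sg e) \<partial>lborel) = 1"
  proof -
    have "emeasure (density lborel (normal_density m sg)) (space (density lborel (normal_density m sg))) = 1"
      using sg_pos by (intro prob_space.emeasure_space_1 prob_space_normal_density)
    then show ?thesis by (subst (asm) emeasure_density) auto
  qed
  moreover have "(\<integral>\<^sup>+e. ennreal (std_normal_density e * exp (c*e\<^sup>2 + b*e)) \<partial>lborel)
     = ennreal (exp (b\<^sup>2/(2*(1-2*c))) / sqrt (1-2*c)) * (\<integral>\<^sup>+e. ennreal (normal_density m sg e) \<partial>lborel)"
    unfolding eq using pc by (subst nn_integral_cmult[symmetric]) (auto simp: ennreal_mult[symmetric] intro!: nn_integral_cong)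
  ultimately show ?thesis by simp
qed


lemma gamma_int:
  fixes k a :: real
  assumes k: "k > 0" and a: "a > 0"
  shows "(\<integral>\<^sup>+x. ennreal (x powr (k - 1) * exp (- a * x)) * indicator {0..} x \<partial>lborel)
         = ennreal (Gamma k / a powr k)"
proof -
  have G: "(\<integral>\<^sup>+t. ennreal (t powr (k - 1) / exp t) * indicator {0..} t \<partial>lborel) = ennreal (Gamma k)"
    by (rule nn_integral_has_integral_lebesgue'[OF _ Gamma_integral_real[OF k]]) simp
  have "(\<integral>\<^sup>+t. ennreal (t powr (k - 1) / exp t) * indicator {0..} t \<partial>lborel)
      = ennreal a * (\<integral>\<^sup>+x. ennreal ((0 + a*x) powr (k - 1) / exp (0 + a*x)) * indicator {0..} (0 + a*x) \<partial>lborel)"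
    using a by (subst nn_integral_real_affine[where c=a and t=0]) auto
  also have "\<dots> = ennreal a * (\<integral>\<^sup>+x. ennreal (a powr (k-1)) * (ennreal (x powr (k - 1) * exp (- a * x)) * indicator {0..} x) \<partial>lborel)"
  proof -
    have "ennreal ((0 + a*x) powr (k - 1) / exp (0 + a*x)) * indicator {0..} (0 + a*x)
        = ennreal (a powr (k-1)) * (ennreal (x powr (k - 1) * exp (- a * x)) * indicator {0..} x)" for x
    proof (cases "x \<ge> 0")
      case True
      then show ?thesis using a
        by (simp add: powr_mult exp_minus field_simps ennreal_mult[symmetric] indicator_def)
    next
      case False
      then have "\<not> (0 \<le> a * x)" using a by (simp add: zero_le_mult_iff)
      then show ?thesis using False by (simp add: indicator_def)
    qed
    then show ?thesis by simp
  qed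
  also have "\<dots> = ennreal (a * a powr (k-1)) * (\<integral>\<^sup>+x. ennreal (x powr (k - 1) * exp (- a * x)) * indicator {0..} x \<partial>lborel)"
    using a by (simp add: nn_integral_cmult ennreal_mult mult.assoc)
  also have "a * a powr (k-1) = a powr k" using a by (simp add: powr_diff)
  finally have "ennreal (Gamma k) = ennreal (a powr k) * (\<integral>\<^sup>+x. ennreal (x powr (k - 1) * exp (- a * x)) * indicator {0..} x \<partial>lborel)"
    using G by simp
  then have "ennreal (Gamma k) / ennreal (a powr k) = (\<integral>\<^sup>+x. ennreal (x powr (k - 1) * exp (- a * x)) * indicator {0..} x \<partial>lborel)"
    using a by (simp add: mult.commute[of "ennreal (a powr k)"] ennreal_mult_divide_eq)
  then show ?thesis using a Gamma_real_pos[OF k] by (simp add: divide_ennreal)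
qed


lemma gsd_mgf:
  fixes k \<theta> u :: real
  assumes k: "k > 0" and th: "\<theta> > 0" and u: "\<theta> * u < 1"
  shows "(\<integral>\<^sup>+x. ennreal (gamma_scaled_density k \<theta> x * exp (u*x)) \<partial>lborel)
         = ennreal ((1 - \<theta>*u) powr (-k))"
proof -
  define a where "a = (1 - \<theta>*u) / \<theta>"
  have a: "a > 0" unfolding a_def using th u by simp
  have Gp: "Gamma k > 0" using k by simp
  have eq: "ennreal (gamma_scaled_density k \<theta> x * exp (u*x))
      = ennreal (1 / (Gamma k * \<theta> powr k)) * (ennreal (x powr (k - 1) * exp (- a * x)) * indicator {0..} x)" for x
  proof (cases "x > 0")
    case True
    have "exp (- x / \<theta>) * exp (u*x) = exp (- a * x)"
      unfolding a_def using th by (simp add: field_simps flip: exp_add)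
    then have "gamma_scaled_density k \<theta> x * exp (u*x) = (1 / (Gamma k * \<theta> powr k)) * (x powr (k - 1) * exp (- a * x))"
      using True by (simp add: gamma_scaled_density_def field_simps)
    then show ?thesis using True Gp th by (simp add: ennreal_mult[symmetric] indicator_def)
  next
    case False
    then show ?thesis by (cases "x = 0") (auto simp: gamma_scaled_density_def indicator_def)
  qed
  have "(\<integral>\<^sup>+x. ennreal (gamma_scaled_density k \<theta> x * exp (u*x)) \<partial>lborel)
     = ennreal (1 / (Gamma k * \<theta> powr k)) * ennreal (Gamma k / a powr k)"
    using gamma_int[OF k a] unfolding eq by (subst nn_integral_cmult) simp_all
  also have "\<dots> = ennreal (1 / (Gamma k * \<theta> powr k) * (Gamma k / a powr k))"
    using Gp th a by (simp add: ennreal_mult[symmetric])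
  also have "1 / (Gamma k * \<theta> powr k) * (Gamma k / a powr k) = 1 / (\<theta> * a) powr k"
    using Gp th a by (simp add: powr_mult)
  also have "\<theta> * a = 1 - \<theta>*u" unfolding a_def using th by simp
  also have "1 / (1 - \<theta>*u) powr k = (1 - \<theta>*u) powr (-k)" using u by (simp add: powr_minus_divide)
  finally show ?thesis .
qed

lemma Gamma_shift_lower:
  fixes \<delta> :: real
  assumes d: "\<delta> > 0"
  shows "Gamma (\<delta> + real n) \<ge> Gamma \<delta> * (min \<delta> 1) ^ n"
proof (induction n)
  case 0 then show ?case by simp
next
  case (Suc n)
  have nz: "\<delta> + real n \<notin> \<int>\<^sub>\<le>\<^sub>0" using d nonpos_Ints_nonpos by fastforce
  have "Gamma (\<delta> + real (Suc n)) = (\<delta> + real n) * Gamma (\<delta> + real n)"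
  proof -
    have "\<delta> + real (Suc n) = (\<delta> + real n) + 1" by simp
    then show ?thesis by (simp only: Gamma_plus1[OF nz])
  qed
  also have "\<dots> \<ge> min \<delta> 1 * (Gamma \<delta> * (min \<delta> 1) ^ n)"
    using Suc.IH d by (intro mult_mono) (auto simp: less_imp_le)
  finally show ?case by (simp add: mult_ac)
qed

lemma ncgamma_summable:
  fixes \<delta> \<Theta> \<theta> x :: real
  assumes d: "\<delta> > 0" and th: "\<theta> > 0" and T: "\<Theta> \<ge> 0"
  shows "summable (\<lambda>n. exp (- \<Theta>) * \<Theta> ^ n / fact n * gamma_scaled_density (\<delta> + real n) \<theta> x)"
proof (cases "x > 0")
  case False
  then show ?thesis by (simp add: gamma_scaled_density_def)
next
  case True
  define m where "m = min \<delta> 1"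
  have m: "m > 0" unfolding m_def using d by simp
  define C where "C = exp (- \<Theta>) * x powr (\<delta> - 1) * exp (- x / \<theta>) / (Gamma \<delta> * \<theta> powr \<delta>)"
  define y where "y = \<Theta> * x / (\<theta> * m)"
  have Gp: "Gamma \<delta> > 0" using d by simp
  have bound: "norm (exp (- \<Theta>) * \<Theta> ^ n / fact n * gamma_scaled_density (\<delta> + real n) \<theta> x)
        \<le> C * (inverse (fact n) * y ^ n)" for n
  proof -
    have Gn: "Gamma (\<delta> + real n) \<ge> Gamma \<delta> * m ^ n" unfolding m_def by (rule Gamma_shift_lower[OF d])
    have Gnp: "Gamma (\<delta> + real n) > 0" using d by simp
    have xp: "x powr (\<delta> + real n - 1) = x powr (\<delta> - 1) * x ^ n"
    proof -
      have "\<delta> + real n - 1 = (\<delta> - 1) + real n" by simp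
      then show ?thesis using True by (simp only: powr_add powr_realpow)
    qed
    have tp: "\<theta> powr (\<delta> + real n) = \<theta> powr \<delta> * \<theta> ^ n"
      using th by (simp add: powr_add powr_realpow)
    have "exp (- \<Theta>) * \<Theta> ^ n / fact n * gamma_scaled_density (\<delta> + real n) \<theta> x
        = (exp (- \<Theta>) * x powr (\<delta> - 1) * exp (- x / \<theta>) / (\<theta> powr \<delta>)) * ((\<Theta> * x / \<theta>) ^ n / fact n) / Gamma (\<delta> + real n)"
      using True th by (simp add: gamma_scaled_density_def xp tp field_simps power_mult_distrib power_divide)
    also have "\<dots> \<le> (exp (- \<Theta>) * x powr (\<delta> - 1) * exp (- x / \<theta>) / (\<theta> powr \<delta>)) * ((\<Theta> * x / \<theta>) ^ n / fact n) / (Gamma \<delta> * m ^ n)"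
      using Gn Gp m T th True Gnp by (intro divide_left_mono) (auto intro!: mult_nonneg_nonneg mult_pos_pos)
    also have "\<dots> = C * (inverse (fact n) * y ^ n)"
      unfolding C_def y_def using m th by (simp add: field_simps power_mult_distrib power_divide)
    finally have fin: "exp (- \<Theta>) * \<Theta> ^ n / fact n * gamma_scaled_density (\<delta> + real n) \<theta> x \<le> C * (inverse (fact n) * y ^ n)" .
    have "exp (- \<Theta>) * \<Theta> ^ n / fact n * gamma_scaled_density (\<delta> + real n) \<theta> x \<ge> 0"
      using True T th Gnp by (simp add: gamma_scaled_density_def)
    then show ?thesis using fin by simp
  qed
  show ?thesis
    by (rule summable_comparison_test'[OF summable_mult[OF summable_exp[of y]] bound])
qed

lemma ncgamma_density_nonneg: "\<Theta> \<ge> 0 \<Longrightarrow> \<delta> > 0 \<Longrightarrow> \<theta> > 0 \<Longrightarrow> ncgamma_density \<delta> \<Theta> \<theta> x \<ge> 0"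
  unfolding ncgamma_density_def
  by (rule suminf_nonneg[OF ncgamma_summable]) (auto simp: gamma_scaled_density_def)


lemma gsd_measurable[measurable]:
  "(\<lambda>x. gamma_scaled_density k \<theta> x) \<in> borel_measurable borel"
  unfolding gamma_scaled_density_def by measurable

lemma ncgamma_density_measurable2:
  "(\<lambda>p. ncgamma_density \<delta> (fst p) \<theta> (snd p)) \<in> borel_measurable (borel \<Otimes>\<^sub>M borel)"
  unfolding ncgamma_density_def by measurable

lemma ncgamma_density_measurable[measurable]:
  "ncgamma_density \<delta> \<Theta> \<theta> \<in> borel_measurable borel"
  unfolding ncgamma_density_def by measurable

lemma ncgamma_mgf:
  fixes \<delta> \<Theta> \<theta> u :: real
  assumes d: "\<delta> > 0" and th: "\<theta> > 0" and T: "\<Theta> \<ge> 0" and u: "\<theta> * u < 1"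
  shows "(\<integral>\<^sup>+x. ennreal (exp (u*x)) \<partial>ncgamma \<delta> \<Theta> \<theta>)
         = ennreal (exp (- \<delta> * wfun u \<theta> + \<Theta> * vfun u \<theta>))"
proof -
  define f where "f n x = exp (- \<Theta>) * \<Theta> ^ n / fact n * gamma_scaled_density (\<delta> + real n) \<theta> x" for n x
  have fnn: "f n x \<ge> 0" for n x
  proof -
    have "Gamma (\<delta> + real n) > 0" using d by simp
    then show ?thesis unfolding f_def using T th by (simp add: gamma_scaled_density_def)
  qed
  have fs: "summable (\<lambda>n. f n x)" for x unfolding f_def by (rule ncgamma_summable[OF d th T])
  have pw: "ennreal (ncgamma_density \<delta> \<Theta> \<theta> x) * ennreal (exp (u*x)) = (\<Sum>n. ennreal (f n x * exp (u*x)))" for x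
  proof -
    have "ennreal (ncgamma_density \<delta> \<Theta> \<theta> x) * ennreal (exp (u*x)) = ennreal ((\<Sum>n. f n x) * exp (u*x))"
      unfolding ncgamma_density_def f_def[symmetric] using fs[of x] fnn
      by (simp add: ennreal_mult suminf_nonneg)
    also have "(\<Sum>n. f n x) * exp (u*x) = (\<Sum>n. f n x * exp (u*x))"
      by (rule suminf_mult2[OF fs])
    also have "ennreal \<dots> = (\<Sum>n. ennreal (f n x * exp (u*x)))"
      by (rule suminf_ennreal2[symmetric]) (auto intro: fnn summable_mult2[OF fs] mult_nonneg_nonneg)
    finally show ?thesis .
  qed
  define q where "q = 1 - \<theta> * u"
  have q: "q > 0" unfolding q_def using u by simp
  have termint: "(\<integral>\<^sup>+x. ennreal (f n x * exp (u*x)) \<partial>lborel)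
       = ennreal (exp (- \<Theta>) * q powr (-\<delta>) * ((\<Theta> / q) ^ n / fact n))" for n
  proof -
    have "(\<integral>\<^sup>+x. ennreal (f n x * exp (u*x)) \<partial>lborel)
        = (\<integral>\<^sup>+x. ennreal (exp (- \<Theta>) * \<Theta> ^ n / fact n) * ennreal (gamma_scaled_density (\<delta> + real n) \<theta> x * exp (u*x)) \<partial>lborel)"
    proof (intro nn_integral_cong)
      fix x
      have "f n x * exp (u*x) = (exp (- \<Theta>) * \<Theta> ^ n / fact n) * (gamma_scaled_density (\<delta> + real n) \<theta> x * exp (u*x))"
        unfolding f_def by (simp only: mult.assoc times_divide_eq_left)
      moreover have "exp (- \<Theta>) * \<Theta> ^ n / fact n \<ge> 0" using T by simp
      ultimately show "ennreal (f n x * exp (u*x)) = ennreal (exp (- \<Theta>) * \<Theta> ^ n / fact n) * ennreal (gamma_scaled_density (\<delta> + real n) \<theta> x * exp (u*x))"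
        by (simp only: ennreal_mult')
    qed
    also have "\<dots> = ennreal (exp (- \<Theta>) * \<Theta> ^ n / fact n) * ennreal (q powr (- (\<delta> + real n)))"
      using d th u unfolding q_def by (subst nn_integral_cmult) (simp_all add: gsd_mgf)
    also have "\<dots> = ennreal (exp (- \<Theta>) * \<Theta> ^ n / fact n * q powr (- (\<delta> + real n)))"
      using T by (subst ennreal_mult') simp_all
    also have "exp (- \<Theta>) * \<Theta> ^ n / fact n * q powr (- (\<delta> + real n)) = exp (- \<Theta>) * q powr (-\<delta>) * ((\<Theta> / q) ^ n / fact n)"
    proof -
      have "q powr (- (\<delta> + real n)) = q powr (-\<delta>) * q powr (- real n)"
        by (simp add: powr_add[symmetric])
      also have "q powr (- real n) = inverse (q ^ n)" using q by (simp add: powr_minus powr_realpow)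
      finally show ?thesis using q by (simp add: power_divide field_simps)
    qed
    finally show ?thesis .
  qed
  have sums: "(\<lambda>n. exp (- \<Theta>) * q powr (-\<delta>) * ((\<Theta> / q) ^ n / fact n)) sums (exp (- \<Theta>) * q powr (-\<delta>) * exp (\<Theta> / q))"
    by (rule sums_mult) (use exp_converges[of "\<Theta>/q"] in \<open>simp add: divide_inverse mult.commute\<close>)
  have "(\<integral>\<^sup>+x. ennreal (exp (u*x)) \<partial>ncgamma \<delta> \<Theta> \<theta>)
      = (\<integral>\<^sup>+x. ennreal (ncgamma_density \<delta> \<Theta> \<theta> x) * ennreal (exp (u*x)) \<partial>lborel)"
    unfolding ncgamma_def by (subst nn_integral_density) auto
  also have "\<dots> = (\<integral>\<^sup>+x. (\<Sum>n. ennreal (f n x * exp (u*x))) \<partial>lborel)" by (simp add: pw)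
  also have "\<dots> = (\<Sum>n. \<integral>\<^sup>+x. ennreal (f n x * exp (u*x)) \<partial>lborel)"
    by (rule nn_integral_suminf) (simp add: f_def)
  also have "\<dots> = (\<Sum>n. ennreal (exp (- \<Theta>) * q powr (-\<delta>) * ((\<Theta> / q) ^ n / fact n)))"
    by (simp add: termint)
  also have "\<dots> = ennreal (exp (- \<Theta>) * q powr (-\<delta>) * exp (\<Theta> / q))"
    using sums q T by (subst suminf_ennreal2) (auto simp: sums_iff)
  also have "exp (- \<Theta>) * q powr (-\<delta>) * exp (\<Theta> / q) = exp (- \<delta> * wfun u \<theta> + \<Theta> * vfun u \<theta>)"
  proof -
    have "q powr (-\<delta>) = exp (- \<delta> * ln q)" using q by (simp add: powr_def)
    moreover have "- \<Theta> + \<Theta> / q = \<Theta> * vfun u \<theta>"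
      unfolding vfun_def q_def[symmetric] using q by (simp add: field_simps q_def)
    ultimately show ?thesis unfolding wfun_def q_def[symmetric]
      by (simp flip: exp_add add: algebra_simps)
  qed
  finally show ?thesis .
qed

lemma ncgamma_prob:
  assumes d: "\<delta> > 0" and th: "\<theta> > 0" and T: "\<Theta> \<ge> 0"
  shows "prob_space (ncgamma \<delta> \<Theta> \<theta>)"
proof
  have "emeasure (ncgamma \<delta> \<Theta> \<theta>) (space (ncgamma \<delta> \<Theta> \<theta>)) = (\<integral>\<^sup>+x. ennreal (exp (0*x)) \<partial>ncgamma \<delta> \<Theta> \<theta>)"
    by simp
  also have "\<dots> = 1" using ncgamma_mgf[OF d th T, of 0] th by (simp add: wfun_def vfun_def)
  finally show "emeasure (ncgamma \<delta> \<Theta> \<theta>) (space (ncgamma \<delta> \<Theta> \<theta>)) = 1" .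
qed


lemma measurable_sigma_gen:
  assumes X: "X \<in> borel_measurable M" and G: "G \<subseteq> Pow (space M)" and sub: "gen_sets M X \<subseteq> G"
  shows "X \<in> borel_measurable (sigma (space M) G)"
proof (rule measurableI)
  fix B :: "real set" assume "B \<in> sets borel"
  then have "X -` B \<inter> space M \<in> G" using sub unfolding gen_sets_def by blast
  then show "X -` B \<inter> space (sigma (space M) G) \<in> sets (sigma (space M) G)"
    using G by (simp add: sigma_sets.Basic)
qed auto

lemma gen_sets_sub: "X \<in> borel_measurable M \<Longrightarrow> gen_sets M X \<subseteq> sets M"
  unfolding gen_sets_def by (auto intro: measurable_sets)

lemma gen_sets_Pow: "gen_sets M X \<subseteq> Pow (space M)"
  unfolding gen_sets_def by auto

locale lh =
  fixes M :: "'a measure" and eps RV :: "int \<Rightarrow> 'a \<Rightarrow> real"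
    and \<delta> \<theta> d \<gamma> :: real and p q :: nat and \<beta> \<alpha> :: "nat \<Rightarrow> real"
  assumes prob: "prob_space M"
    and eps_meas: "\<And>u. eps u \<in> borel_measurable M"
    and RV_meas: "\<And>u. RV u \<in> borel_measurable M"
    and RV_pos: "\<And>u \<omega>. \<omega> \<in> space M \<Longrightarrow> RV u \<omega> > 0"
    and params: "\<delta> > 0" "\<theta> > 0" "d \<ge> 0"
    and beta_nn: "\<And>i. 1 \<le> i \<Longrightarrow> i \<le> p \<Longrightarrow> \<beta> i \<ge> 0"
    and alpha_nn: "\<And>j. 1 \<le> j \<Longrightarrow> j \<le> q \<Longrightarrow> \<alpha> j \<ge> 0"
    and eps_normal: "\<And>u. distributed M lborel (eps u) std_normal_density"
    and eps_indep_past: "\<And>s. prob_space.indep_set M (gen_sets M (eps (s + 1)))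
                                   (sets (filt_plus M eps RV s))"
    and RV_cond_law: "\<And>s B. B \<in> sets borel \<Longrightarrow>
        AE \<omega> in M. real_cond_exp M (filt M eps RV s) (\<lambda>\<omega>'. indicator B (RV (s + 1) \<omega>')) \<omega>
                   = measure (ncgamma \<delta> (Theta d p q \<beta> \<alpha> \<gamma> eps RV s \<omega>) \<theta>) B"
begin

sublocale prob_space M by (rule prob)

abbreviation "F s \<equiv> filt M eps RV s"
abbreviation "Fp s \<equiv> filt_plus M eps RV s"
abbreviation "Th s \<equiv> Theta d p q \<beta> \<alpha> \<gamma> eps RV s"
abbreviation "ell u \<equiv> lev \<gamma> eps RV u"

definition genF :: "int \<Rightarrow> 'a set set" where
  "genF s = (\<Union>u\<in>{..s}. gen_sets M (eps u) \<union> gen_sets M (RV u))"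

lemma genF_Pow: "genF s \<subseteq> Pow (space M)" unfolding genF_def using gen_sets_Pow by blast
lemma genF_sets: "genF s \<subseteq> sets M" unfolding genF_def using gen_sets_sub eps_meas RV_meas by blast

lemma F_eq: "F s = sigma (space M) (genF s)" unfolding filt_def genF_def ..
lemma Fp_eq: "Fp s = sigma (space M) (genF s \<union> gen_sets M (RV (s+1)))" unfolding filt_plus_def genF_def ..

lemma space_F[simp]: "space (F s) = space M" unfolding F_eq using genF_Pow by simp
lemma space_Fp[simp]: "space (Fp s) = space M" unfolding Fp_eq by (simp add: space_measure_of_conv)

lemma sets_F: "sets (F s) = sigma_sets (space M) (genF s)" unfolding F_eq using genF_Pow by simp
lemma sets_Fp: "sets (Fp s) = sigma_sets (space M) (genF s \<union> gen_sets M (RV (s+1)))"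
proof -
  have "genF s \<union> gen_sets M (RV (s+1)) \<subseteq> Pow (space M)" using genF_Pow gen_sets_Pow by blast
  then show ?thesis unfolding Fp_eq by (simp add: sets_measure_of)
qed

lemma sets_F_sub: "sets (F s) \<subseteq> sets M"
  unfolding sets_F by (rule sets.sigma_sets_subset[OF genF_sets])
lemma sets_Fp_sub: "sets (Fp s) \<subseteq> sets M"
  unfolding sets_Fp by (rule sets.sigma_sets_subset) (use genF_sets gen_sets_sub RV_meas in blast)

lemma genF_mono: "s \<le> s' \<Longrightarrow> genF s \<subseteq> genF s'" unfolding genF_def by (rule UN_mono) auto

lemma F_mono_sets: "s \<le> s' \<Longrightarrow> sets (F s) \<subseteq> sets (F s')"
  unfolding sets_F by (rule sigma_sets_mono') (use genF_mono in auto)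

lemma F_Fp_sets: "sets (F s) \<subseteq> sets (Fp s)"
  unfolding sets_F sets_Fp by (rule sigma_sets_mono') auto

lemma Fp_F_sets: "sets (Fp s) \<subseteq> sets (F (s+1))"
  unfolding sets_F sets_Fp
proof (rule sigma_sets_mono')
  show "genF s \<union> gen_sets M (RV (s + 1)) \<subseteq> genF (s + 1)"
    using genF_mono[of s "s+1"] unfolding genF_def by auto
qed

lemma subalg_F: "subalgebra M (F s)" unfolding subalgebra_def using sets_F_sub by simp
lemma subalg_FF: "s \<le> s' \<Longrightarrow> subalgebra (F s') (F s)" unfolding subalgebra_def using F_mono_sets by simp

lemma sfs_F: "sigma_finite_subalgebra M (F s)"
  by (rule finite_measure_subalgebra_is_sigma_finite)
     (simp add: finite_measure_subalgebra_def finite_measure_subalgebra_axioms_def subalg_F finite_measure_axioms)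

lemma eps_F: "u \<le> s \<Longrightarrow> eps u \<in> borel_measurable (F s)"
  unfolding F_eq by (rule measurable_sigma_gen[OF eps_meas genF_Pow]) (auto simp: genF_def)
lemma RV_F: "u \<le> s \<Longrightarrow> RV u \<in> borel_measurable (F s)"
  unfolding F_eq by (rule measurable_sigma_gen[OF RV_meas genF_Pow]) (auto simp: genF_def)

lemma meas_F_Fp: "f \<in> borel_measurable (F s) \<Longrightarrow> f \<in> borel_measurable (Fp s)"
  by (rule measurable_from_subalg[of "Fp s" "F s"]) (simp_all add: subalgebra_def F_Fp_sets)
lemma meas_Fp_F: "f \<in> borel_measurable (Fp s) \<Longrightarrow> f \<in> borel_measurable (F (s+1))"
  by (rule measurable_from_subalg[of "F (s+1)" "Fp s"]) (simp_all add: subalgebra_def Fp_F_sets)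
lemma meas_F_M: "f \<in> borel_measurable (F s) \<Longrightarrow> f \<in> borel_measurable M"
  by (rule measurable_from_subalg[OF subalg_F])
lemma meas_F_mono: "f \<in> borel_measurable (F s) \<Longrightarrow> s \<le> s' \<Longrightarrow> f \<in> borel_measurable (F s')"
  by (rule measurable_from_subalg[OF subalg_FF])

lemma RV_Fp: "RV (s+1) \<in> borel_measurable (Fp s)"
  unfolding Fp_eq by (rule measurable_sigma_gen[OF RV_meas]) (use genF_Pow gen_sets_Pow in blast)+

lemma ell_F: "u \<le> s \<Longrightarrow> ell u \<in> borel_measurable (F s)"
  unfolding lev_def using eps_F RV_F by measurable

lemma Th_F: "Th s \<in> borel_measurable (F s)"
  unfolding Theta_def
proof (intro borel_measurable_add borel_measurable_sum borel_measurable_times borel_measurable_const)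
  show "RV (s + 1 - int i) \<in> borel_measurable (F s)" if "i \<in> {1..p}" for i
    using that by (intro RV_F) auto
  show "ell (s + 1 - int j) \<in> borel_measurable (F s)" if "j \<in> {1..q}" for j
    using that by (intro ell_F) auto
qed

lemma Th_nn: "\<omega> \<in> space M \<Longrightarrow> Th s \<omega> \<ge> 0"
  unfolding Theta_def using params beta_nn alpha_nn RV_pos
  by (intro add_nonneg_nonneg sum_nonneg mult_nonneg_nonneg) (auto simp: lev_def less_imp_le)

end

context lh begin

lemma Th_M[measurable]: "Th s \<in> borel_measurable M" by (rule meas_F_M[OF Th_F])
lemma RV_M[measurable]: "RV u \<in> borel_measurable M" by (rule RV_meas)
lemma eps_M[measurable]: "eps u \<in> borel_measurable M" by (rule eps_meas)

lemma nd_meas: "(\<lambda>(\<omega>, x). ennreal (ncgamma_density \<delta> (Th s \<omega>) \<theta> x)) \<in> borel_measurable (M \<Otimes>\<^sub>M lborel)"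
proof -
  have 1: "(\<lambda>p. (Th s (fst p), snd p)) \<in> measurable (M \<Otimes>\<^sub>M lborel) (borel \<Otimes>\<^sub>M borel)"
    by measurable
  have "(\<lambda>p. ncgamma_density \<delta> (fst p) \<theta> (snd p)) \<circ> (\<lambda>p. (Th s (fst p), snd p)) \<in> borel_measurable (M \<Otimes>\<^sub>M lborel)"
    by (rule measurable_comp[OF 1 ncgamma_density_measurable2])
  then show ?thesis by (simp add: o_def case_prod_beta')
qed

lemma ncg_prob: "\<omega> \<in> space M \<Longrightarrow> prob_space (ncgamma \<delta> (Th s \<omega>) \<theta>)"
  using ncgamma_prob params Th_nn by simp

lemma ncg_int: "g \<in> borel_measurable borel \<Longrightarrow>
   (\<integral>\<^sup>+x. g x \<partial>ncgamma \<delta> \<Theta> \<theta>) = (\<integral>\<^sup>+x. ennreal (ncgamma_density \<delta> \<Theta> \<theta> x) * g x \<partial>lborel)"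
  unfolding ncgamma_def by (subst nn_integral_density) auto

lemma ncg_int_meas:
  assumes g: "g \<in> borel_measurable borel"
  shows "(\<lambda>\<omega>. \<integral>\<^sup>+x. g x \<partial>ncgamma \<delta> (Th s \<omega>) \<theta>) \<in> borel_measurable (F s)"
proof -
  have 1: "(\<lambda>p. (Th s (fst p), snd p)) \<in> measurable (F s \<Otimes>\<^sub>M lborel) (borel \<Otimes>\<^sub>M borel)"
    using Th_F by measurable
  have "(\<lambda>p. ncgamma_density \<delta> (fst p) \<theta> (snd p)) \<circ> (\<lambda>p. (Th s (fst p), snd p)) \<in> borel_measurable (F s \<Otimes>\<^sub>M lborel)"
    by (rule measurable_comp[OF 1 ncgamma_density_measurable2])
  then have 2: "(\<lambda>(\<omega>, x). ennreal (ncgamma_density \<delta> (Th s \<omega>) \<theta> x) * g x) \<in> borel_measurable (F s \<Otimes>\<^sub>M lborel)"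
    using g by (simp add: o_def case_prod_beta') measurable
  show ?thesis
    by (subst ncg_int[OF g]) (rule lborel.borel_measurable_nn_integral[OF 2])
qed

end

context lh begin

lemma cond_law_ind:
  assumes A: "A \<in> sets (F s)" and B: "B \<in> sets borel"
  shows "(\<integral>\<^sup>+\<omega>. indicator A \<omega> * indicator B (RV (s+1) \<omega>) \<partial>M)
       = (\<integral>\<^sup>+\<omega>. indicator A \<omega> * emeasure (ncgamma \<delta> (Th s \<omega>) \<theta>) B \<partial>M)"
proof -
  interpret S: sigma_finite_subalgebra M "F s" by (rule sfs_F)
  have AM: "A \<in> sets M" using A sets_F_sub by blast
  define f :: "'a \<Rightarrow> real" where "f \<omega> = indicator B (RV (s+1) \<omega>)" for \<omega>
  have fm[measurable]: "f \<in> borel_measurable M" unfolding f_def using B by measurable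
  have fi: "integrable M f"
    by (rule integrable_const_bound[where B=1]) (simp_all add: f_def indicator_def)
  define h where "h \<omega> = measure (ncgamma \<delta> (Th s \<omega>) \<theta>) B" for \<omega>
  have hm: "h \<in> borel_measurable M"
  proof -
    have Bm: "indicator B \<in> borel_measurable borel" using B by simp
    have "(\<lambda>\<omega>. \<integral>\<^sup>+x. indicator B x \<partial>ncgamma \<delta> (Th s \<omega>) \<theta>) \<in> borel_measurable M"
      by (rule meas_F_M[OF ncg_int_meas[OF Bm]])
    then have "(\<lambda>\<omega>. enn2real (\<integral>\<^sup>+x. indicator B x \<partial>ncgamma \<delta> (Th s \<omega>) \<theta>)) \<in> borel_measurable M"
      by (rule borel_measurable_enn2real)
    moreover have "enn2real (\<integral>\<^sup>+x. indicator B x \<partial>ncgamma \<delta> (Th s \<omega>) \<theta>) = h \<omega>" for \<omega>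
    proof -
      have "B \<in> sets (ncgamma \<delta> (Th s \<omega>) \<theta>)" using B unfolding ncgamma_def by simp
      then have "(\<integral>\<^sup>+x. indicator B x \<partial>ncgamma \<delta> (Th s \<omega>) \<theta>) = emeasure (ncgamma \<delta> (Th s \<omega>) \<theta>) B"
        by (rule nn_integral_indicator)
      then show ?thesis unfolding h_def measure_def by simp
    qed
    ultimately show ?thesis by simp
  qed
  have hi: "integrable M h"
  proof (rule integrable_const_bound[where B=1])
    show "AE x in M. norm (h x) \<le> 1"
    proof (rule AE_I2)
      fix \<omega> assume "\<omega> \<in> space M"
      then interpret N: prob_space "ncgamma \<delta> (Th s \<omega>) \<theta>" by (rule ncg_prob)
      show "norm (h \<omega>) \<le> 1" unfolding h_def by simp
    qed
  qed (rule hm)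
  have AE1: "AE \<omega> in M. real_cond_exp M (F s) f \<omega> = h \<omega>"
    unfolding f_def h_def by (rule RV_cond_law[OF B])
  have "(\<integral>\<^sup>+\<omega>. indicator A \<omega> * indicator B (RV (s+1) \<omega>) \<partial>M) = (\<integral>\<^sup>+\<omega>. ennreal (indicator A \<omega> * f \<omega>) \<partial>M)"
    unfolding f_def by (intro nn_integral_cong) (simp add: indicator_def)
  also have "\<dots> = ennreal (\<integral>\<omega>. indicator A \<omega> * f \<omega> \<partial>M)"
    by (rule nn_integral_eq_integral) (use integrable_mult_indicator[OF AM fi] in \<open>simp_all add: f_def\<close>)
  also have "(\<integral>\<omega>. indicator A \<omega> * f \<omega> \<partial>M) = (\<integral>\<omega>\<in>A. f \<omega> \<partial>M)"
    by (simp add: set_lebesgue_integral_def)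
  also have "\<dots> = (\<integral>\<omega>\<in>A. real_cond_exp M (F s) f \<omega> \<partial>M)"
    by (rule S.real_cond_exp_intA[OF fi A])
  also have "\<dots> = (\<integral>\<omega>\<in>A. h \<omega> \<partial>M)"
    unfolding set_lebesgue_integral_def using AE1
    by (intro integral_cong_AE) (auto intro!: borel_measurable_times borel_measurable_indicator AM hm borel_measurable_cond_exp2)
  also have "\<dots> = (\<integral>\<omega>. indicator A \<omega> * h \<omega> \<partial>M)"
    by (simp add: set_lebesgue_integral_def)
  also have "ennreal \<dots> = (\<integral>\<^sup>+\<omega>. ennreal (indicator A \<omega> * h \<omega>) \<partial>M)"
  proof (rule nn_integral_eq_integral[symmetric])
    show "integrable M (\<lambda>\<omega>. indicator A \<omega> * h \<omega>)"
      using integrable_mult_indicator[OF AM hi] by simp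
    show "AE x in M. 0 \<le> indicator A x * h x" unfolding h_def by simp
  qed
  also have "\<dots> = (\<integral>\<^sup>+\<omega>. indicator A \<omega> * emeasure (ncgamma \<delta> (Th s \<omega>) \<theta>) B \<partial>M)"
  proof (intro nn_integral_cong)
    fix \<omega> assume "\<omega> \<in> space M"
    then interpret N: prob_space "ncgamma \<delta> (Th s \<omega>) \<theta>" by (rule ncg_prob)
    show "ennreal (indicator A \<omega> * h \<omega>) = indicator A \<omega> * emeasure (ncgamma \<delta> (Th s \<omega>) \<theta>) B"
      unfolding h_def by (simp add: N.emeasure_eq_measure indicator_def)
  qed
  finally show ?thesis .
qed


lemma cond_law_int:
  assumes A: "A \<in> sets (F s)" and g[measurable]: "g \<in> borel_measurable borel"
  shows "(\<integral>\<^sup>+\<omega>. indicator A \<omega> * g (RV (s+1) \<omega>) \<partial>M)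
       = (\<integral>\<^sup>+\<omega>. indicator A \<omega> * (\<integral>\<^sup>+x. g x \<partial>ncgamma \<delta> (Th s \<omega>) \<theta>) \<partial>M)"
proof -
  interpret P: pair_sigma_finite M lborel
    by (simp add: pair_sigma_finite_def sigma_finite_measure_axioms lborel.sigma_finite_measure_axioms)
  have AM[measurable]: "A \<in> sets M" using A sets_F_sub by blast
  define nd where "nd \<omega> x = ennreal (ncgamma_density \<delta> (Th s \<omega>) \<theta> x)" for \<omega> x
  have ndm: "case_prod nd \<in> borel_measurable (M \<Otimes>\<^sub>M lborel)" unfolding nd_def using nd_meas .
  have ndx[measurable]: "(\<lambda>\<omega>. nd \<omega> x) \<in> borel_measurable M" for x
  proof -
    have "case_prod nd \<circ> (\<lambda>\<omega>. (\<omega>, x)) \<in> borel_measurable M"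
      by (rule measurable_comp[OF measurable_Pair2' ndm]) simp
    then show ?thesis by (simp add: o_def)
  qed
  define K where "K x = (\<integral>\<^sup>+\<omega>. indicator A \<omega> * nd \<omega> x \<partial>M)" for x
  have R: "(\<integral>\<^sup>+\<omega>. indicator A \<omega> * (\<integral>\<^sup>+x. h x \<partial>ncgamma \<delta> (Th s \<omega>) \<theta>) \<partial>M) = (\<integral>\<^sup>+x. K x * h x \<partial>lborel)"
    if hm: "h \<in> borel_measurable borel" for h
  proof -
    have j: "(\<lambda>(\<omega>, x). indicator A \<omega> * (nd \<omega> x * h x)) \<in> borel_measurable (M \<Otimes>\<^sub>M lborel)"
    proof -
      have "(\<lambda>p. indicator A (fst p) * (case_prod nd p * h (snd p))) \<in> borel_measurable (M \<Otimes>\<^sub>M lborel)"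
        using ndm hm by measurable
      then show ?thesis by (simp add: case_prod_beta')
    qed
    have "(\<integral>\<^sup>+\<omega>. indicator A \<omega> * (\<integral>\<^sup>+x. h x \<partial>ncgamma \<delta> (Th s \<omega>) \<theta>) \<partial>M)
        = (\<integral>\<^sup>+\<omega>. (\<integral>\<^sup>+x. indicator A \<omega> * (nd \<omega> x * h x) \<partial>lborel) \<partial>M)"
      unfolding ncg_int[OF hm] nd_def by (intro nn_integral_cong nn_integral_cmult[symmetric]) (use hm in measurable)
    also have "\<dots> = (\<integral>\<^sup>+x. (\<integral>\<^sup>+\<omega>. indicator A \<omega> * (nd \<omega> x * h x) \<partial>M) \<partial>lborel)"
      by (rule P.Fubini'[symmetric, OF j])
    also have "\<dots> = (\<integral>\<^sup>+x. K x * h x \<partial>lborel)"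
      unfolding K_def by (intro nn_integral_cong) (subst nn_integral_multc[symmetric], measurable, simp add: mult.assoc)
    finally show ?thesis .
  qed
  have Km: "K \<in> borel_measurable lborel"
  proof -
    have "(\<lambda>(x, \<omega>). indicator A \<omega> * nd \<omega> x) \<in> borel_measurable (lborel \<Otimes>\<^sub>M M)"
    proof -
      have "(\<lambda>p. indicator A (snd p) * case_prod nd (snd p, fst p)) \<in> borel_measurable (lborel \<Otimes>\<^sub>M M)"
        using ndm by measurable
      then show ?thesis by (simp add: case_prod_beta')
    qed
    then show ?thesis unfolding K_def by (rule borel_measurable_nn_integral)
  qed
  define \<mu> where "\<mu> = distr (density M (indicator A)) lborel (RV (s+1))"
  have L: "(\<integral>\<^sup>+\<omega>. indicator A \<omega> * h (RV (s+1) \<omega>) \<partial>M) = (\<integral>\<^sup>+x. h x \<partial>\<mu>)"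
    if hm: "h \<in> borel_measurable borel" for h
    unfolding \<mu>_def using hm by (subst nn_integral_distr) (simp_all add: nn_integral_density)
  have \<mu>eq: "\<mu> = density lborel K"
  proof (rule measure_eqI)
    show "sets \<mu> = sets (density lborel K)" unfolding \<mu>_def by simp
    fix B assume "B \<in> sets \<mu>"
    then have B: "B \<in> sets borel" unfolding \<mu>_def by simp
    have "emeasure \<mu> B = (\<integral>\<^sup>+x. indicator B x \<partial>\<mu>)"
      using \<open>B \<in> sets \<mu>\<close> by (simp add: nn_integral_indicator)
    also have "\<dots> = (\<integral>\<^sup>+\<omega>. indicator A \<omega> * indicator B (RV (s+1) \<omega>) \<partial>M)"
      using L[of "indicator B"] B by simp
    also have "\<dots> = (\<integral>\<^sup>+\<omega>. indicator A \<omega> * emeasure (ncgamma \<delta> (Th s \<omega>) \<theta>) B \<partial>M)"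
      by (rule cond_law_ind[OF A B])
    also have "\<dots> = (\<integral>\<^sup>+\<omega>. indicator A \<omega> * (\<integral>\<^sup>+x. indicator B x \<partial>ncgamma \<delta> (Th s \<omega>) \<theta>) \<partial>M)"
    proof -
      have "B \<in> sets (ncgamma \<delta> \<Theta> \<theta>)" for \<Theta> using B unfolding ncgamma_def by simp
      then show ?thesis by (simp add: nn_integral_indicator)
    qed
    also have "\<dots> = (\<integral>\<^sup>+x. K x * indicator B x \<partial>lborel)"
      by (rule R) (use B in simp)
    also have "\<dots> = emeasure (density lborel K) B"
      using B Km by (simp add: emeasure_density nn_integral_set_ennreal)
    finally show "emeasure \<mu> B = emeasure (density lborel K) B" .
  qed
  show ?thesis
    using L[OF g] R[OF g] \<mu>eq Km by (simp add: nn_integral_density)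
qed

end

context lh begin

lemma indep_int:
  fixes Z :: "'a \<Rightarrow> 'b" and h :: "'b \<times> real \<Rightarrow> ennreal"
  assumes Z: "Z \<in> measurable (Fp s) N" and h[measurable]: "h \<in> borel_measurable (N \<Otimes>\<^sub>M lborel)"
  shows "(\<integral>\<^sup>+\<omega>. h (Z \<omega>, eps (s+1) \<omega>) \<partial>M)
       = (\<integral>\<^sup>+\<omega>. (\<integral>\<^sup>+e. ennreal (std_normal_density e) * h (Z \<omega>, e) \<partial>lborel) \<partial>M)"
proof -
  have ZM[measurable]: "Z \<in> measurable M N"
    by (rule measurable_from_subalg[OF _ Z]) (simp add: subalgebra_def sets_Fp_sub)
  have ind: "prob (X \<inter> Y) = prob X * prob Y" if "X \<in> gen_sets M (eps (s + 1))" "Y \<in> sets (Fp s)" for X Y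
  proof -
    have "\<forall>a\<in>gen_sets M (eps (s + 1)). \<forall>b\<in>sets (Fp s). prob (a \<inter> b) = prob a * prob b"
      using eps_indep_past[of s] unfolding indep_sets2_eq by (elim conjE)
    then show ?thesis using that by simp
  qed
  interpret D1: prob_space "distr M lborel (eps (s+1))" by (rule prob_space_distr) simp
  interpret D2: prob_space "distr M N Z" by (rule prob_space_distr) simp
  have deq: "distr M lborel (eps (s+1)) \<Otimes>\<^sub>M distr M N Z = distr M (lborel \<Otimes>\<^sub>M N) (\<lambda>x. (eps (s+1) x, Z x))"
  proof (rule pair_measure_eqI)
    show "sigma_finite_measure (distr M lborel (eps (s+1)))" by (rule D1.sigma_finite_measure_axioms)
    show "sigma_finite_measure (distr M N Z)" by (rule D2.sigma_finite_measure_axioms)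
    show "sets (distr M lborel (eps (s+1)) \<Otimes>\<^sub>M distr M N Z) = sets (distr M (lborel \<Otimes>\<^sub>M N) (\<lambda>x. (eps (s+1) x, Z x)))"
      unfolding sets_distr[of M "lborel \<Otimes>\<^sub>M N"] by (rule sets_pair_measure_cong) simp_all
    fix A B assume A: "A \<in> sets (distr M lborel (eps (s+1)))" and B: "B \<in> sets (distr M N Z)"
    then have A': "A \<in> sets borel" and B': "B \<in> sets N" by simp_all
    show "emeasure (distr M lborel (eps (s+1))) A * emeasure (distr M N Z) B
        = emeasure (distr M (lborel \<Otimes>\<^sub>M N) (\<lambda>x. (eps (s+1) x, Z x))) (A \<times> B)"
    proof -
      have X: "eps (s+1) -` A \<inter> space M \<in> gen_sets M (eps (s + 1))" using A' unfolding gen_sets_def by (intro CollectI exI[of _ A]) simp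
      have Y: "Z -` B \<inter> space M \<in> sets (Fp s)" using measurable_sets[OF Z B'] by simp
      have AB: "A \<times> B \<in> sets (lborel \<Otimes>\<^sub>M N)" using A' B' by simp
      have pre: "(\<lambda>x. (eps (s+1) x, Z x)) -` (A \<times> B) \<inter> space M = (eps (s+1) -` A \<inter> space M) \<inter> (Z -` B \<inter> space M)"
        by auto
      have "emeasure (distr M (lborel \<Otimes>\<^sub>M N) (\<lambda>x. (eps (s+1) x, Z x))) (A \<times> B)
          = emeasure M ((eps (s+1) -` A \<inter> space M) \<inter> (Z -` B \<inter> space M))"
        by (subst emeasure_distr[OF _ AB]) (simp_all only: pre, measurable)
      also have "\<dots> = ennreal (prob (eps (s+1) -` A \<inter> space M) * prob (Z -` B \<inter> space M))"
        by (simp only: emeasure_eq_measure ind[OF X Y])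
      also have "\<dots> = emeasure (distr M lborel (eps (s+1))) A * emeasure (distr M N Z) B"
        using A' B' by (simp add: emeasure_distr emeasure_eq_measure ennreal_mult)
      finally show ?thesis ..
    qed
  qed
  have dens: "distr M lborel (eps (s+1)) = density lborel (\<lambda>x. ennreal (std_normal_density x))"
    using eps_normal[of "s+1"] unfolding distributed_def by simp
  interpret P: pair_sigma_finite "distr M lborel (eps (s+1))" "distr M N Z"
    by (simp add: pair_sigma_finite_def D1.sigma_finite_measure_axioms D2.sigma_finite_measure_axioms)
  define h' where "h' p = h (snd p, fst p)" for p
  have hl: "h' \<in> borel_measurable (lborel \<Otimes>\<^sub>M N)" unfolding h'_def by measurable
  have h'm: "h' \<in> borel_measurable (distr M lborel (eps (s+1)) \<Otimes>\<^sub>M distr M N Z)"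
  proof -
    have "sets (distr M lborel (eps (s+1)) \<Otimes>\<^sub>M distr M N Z) = sets (lborel \<Otimes>\<^sub>M N)"
      by (rule sets_pair_measure_cong) simp_all
    then have "measurable (distr M lborel (eps (s+1)) \<Otimes>\<^sub>M distr M N Z) borel = measurable (lborel \<Otimes>\<^sub>M N) borel"
      by (rule measurable_cong_sets) simp
    then show ?thesis using hl by (rule ssubst)
  qed
  have pm: "(\<lambda>x. (eps (s+1) x, Z x)) \<in> measurable M (lborel \<Otimes>\<^sub>M N)" by measurable
  have im: "(\<lambda>z. \<integral>\<^sup>+e. ennreal (std_normal_density e) * h (z, e) \<partial>lborel) \<in> borel_measurable N"
    by (rule lborel.borel_measurable_nn_integral) measurable
  have "(\<integral>\<^sup>+\<omega>. h (Z \<omega>, eps (s+1) \<omega>) \<partial>M) = (\<integral>\<^sup>+\<omega>. h' (eps (s+1) \<omega>, Z \<omega>) \<partial>M)"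
    unfolding h'_def by simp
  also have "\<dots> = (\<integral>\<^sup>+p. h' p \<partial>distr M (lborel \<Otimes>\<^sub>M N) (\<lambda>x. (eps (s+1) x, Z x)))"
    by (rule nn_integral_distr[symmetric, OF pm]) (simp add: hl)
  also have "\<dots> = (\<integral>\<^sup>+p. h' p \<partial>(distr M lborel (eps (s+1)) \<Otimes>\<^sub>M distr M N Z))"
    unfolding deq ..
  also have "\<dots> = (\<integral>\<^sup>+z. (\<integral>\<^sup>+e. h' (e, z) \<partial>distr M lborel (eps (s+1))) \<partial>distr M N Z)"
    by (rule P.nn_integral_snd[symmetric, OF h'm])
  also have "\<dots> = (\<integral>\<^sup>+z. (\<integral>\<^sup>+e. ennreal (std_normal_density e) * h (z, e) \<partial>lborel) \<partial>distr M N Z)"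
    unfolding dens h'_def by (intro nn_integral_cong) (simp add: nn_integral_density)
  also have "\<dots> = (\<integral>\<^sup>+\<omega>. (\<integral>\<^sup>+e. ennreal (std_normal_density e) * h (Z \<omega>, e) \<partial>lborel) \<partial>M)"
    by (rule nn_integral_distr[OF ZM]) (simp add: im)
  finally show ?thesis .
qed

end

definition Xp :: "real \<Rightarrow> real \<Rightarrow> real \<Rightarrow> real \<Rightarrow> real" where
  "Xp \<gamma> a b c = a + c * \<gamma>\<^sup>2 + (b - 2*c*\<gamma>)\<^sup>2 / (2*(1 - 2*c))"

lemma gauss_shift:
  fixes a b c \<gamma> x :: real
  assumes c: "c < 1/2" and x: "x \<ge> 0"
  shows "(\<integral>\<^sup>+e. ennreal (std_normal_density e) * ennreal (exp (a*x + c*(e - \<gamma>* sqrt x)\<^sup>2 + b* sqrt x*e)) \<partial>lborel)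
       = ennreal (exp (Xp \<gamma> a b c * x) / sqrt (1 - 2*c))"
proof -
  define \<beta> where "\<beta> = (b - 2*c*\<gamma>) * sqrt x"
  have sq: "(sqrt x)\<^sup>2 = x" using x by simp
  have e: "exp (a*x + c*(e - \<gamma>* sqrt x)\<^sup>2 + b* sqrt x*e) = exp (a*x + c*\<gamma>\<^sup>2*x) * exp (c*e\<^sup>2 + \<beta>*e)" for e
  proof -
    have "a*x + c*(e - \<gamma>* sqrt x)\<^sup>2 + b* sqrt x*e = (a*x + c*\<gamma>\<^sup>2*x) + (c*e\<^sup>2 + \<beta>*e)"
      unfolding \<beta>_def using sq by (simp add: power2_eq_square algebra_simps)
    then show ?thesis by (simp only: exp_add[symmetric])
  qed
  have "(\<integral>\<^sup>+e. ennreal (std_normal_density e) * ennreal (exp (a*x + c*(e - \<gamma>* sqrt x)\<^sup>2 + b* sqrt x*e)) \<partial>lborel)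
      = (\<integral>\<^sup>+e. ennreal (exp (a*x + c*\<gamma>\<^sup>2*x)) * ennreal (std_normal_density e * exp (c*e\<^sup>2 + \<beta>*e)) \<partial>lborel)"
    unfolding e by (intro nn_integral_cong) (simp add: ennreal_mult[symmetric] mult_ac)
  also have "\<dots> = ennreal (exp (a*x + c*\<gamma>\<^sup>2*x)) * ennreal (exp (\<beta>\<^sup>2/(2*(1-2*c))) / sqrt (1-2*c))"
    by (subst nn_integral_cmult) (simp_all add: gauss_mgf[OF c])
  also have "\<dots> = ennreal (exp (Xp \<gamma> a b c * x) / sqrt (1 - 2*c))"
  proof -
    have "\<beta>\<^sup>2 = (b - 2*c*\<gamma>)\<^sup>2 * x" unfolding \<beta>_def using sq by (simp add: power_mult_distrib)
    then have "a*x + c*\<gamma>\<^sup>2*x + \<beta>\<^sup>2/(2*(1-2*c)) = Xp \<gamma> a b c * x"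
      unfolding Xp_def by (simp add: algebra_simps add_divide_distrib)
    then have "exp (a*x + c*\<gamma>\<^sup>2*x) * (exp (\<beta>\<^sup>2/(2*(1-2*c))) / sqrt (1-2*c)) = exp (Xp \<gamma> a b c * x) / sqrt (1 - 2*c)"
      by (simp flip: exp_add)
    then show ?thesis by (subst ennreal_mult[symmetric]) (simp_all only: exp_ge_zero, use c in simp)
  qed
  finally show ?thesis .
qed

context lh begin

lemma cond_law_ce:
  assumes g[measurable]: "g \<in> borel_measurable borel"
  shows "AE \<omega> in M. (\<integral>\<^sup>+x. g x \<partial>ncgamma \<delta> (Th s \<omega>) \<theta>) = nn_cond_exp M (F s) (\<lambda>\<omega>. g (RV (s+1) \<omega>)) \<omega>"
proof -
  interpret S: sigma_finite_subalgebra M "F s" by (rule sfs_F)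
  show ?thesis
  proof (rule S.nn_cond_exp_charact)
    fix A assume A: "A \<in> sets (F s)"
    show "(\<integral>\<^sup>+\<omega>\<in>A. g (RV (s+1) \<omega>) \<partial>M) = (\<integral>\<^sup>+\<omega>\<in>A. (\<integral>\<^sup>+x. g x \<partial>ncgamma \<delta> (Th s \<omega>) \<theta>) \<partial>M)"
      using cond_law_int[OF A g] by (simp add: mult.commute)
  next
    show "(\<lambda>\<omega>. g (RV (s+1) \<omega>)) \<in> borel_measurable M" by measurable
    show "(\<lambda>\<omega>. \<integral>\<^sup>+x. g x \<partial>ncgamma \<delta> (Th s \<omega>) \<theta>) \<in> borel_measurable (F s)"
      by (rule ncg_int_meas[OF g])
  qed
qed

lemma cond_law_G:
  assumes g[measurable]: "g \<in> borel_measurable borel" and G: "G \<in> borel_measurable (F s)"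
  shows "(\<integral>\<^sup>+\<omega>. G \<omega> * g (RV (s+1) \<omega>) \<partial>M) = (\<integral>\<^sup>+\<omega>. G \<omega> * (\<integral>\<^sup>+x. g x \<partial>ncgamma \<delta> (Th s \<omega>) \<theta>) \<partial>M)"
proof -
  interpret S: sigma_finite_subalgebra M "F s" by (rule sfs_F)
  have "(\<integral>\<^sup>+\<omega>. G \<omega> * g (RV (s+1) \<omega>) \<partial>M) = (\<integral>\<^sup>+\<omega>. G \<omega> * nn_cond_exp M (F s) (\<lambda>\<omega>. g (RV (s+1) \<omega>)) \<omega> \<partial>M)"
    by (rule S.nn_cond_exp_intg[symmetric, OF G]) measurable
  also have "\<dots> = (\<integral>\<^sup>+\<omega>. G \<omega> * (\<integral>\<^sup>+x. g x \<partial>ncgamma \<delta> (Th s \<omega>) \<theta>) \<partial>M)"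
    using cond_law_ce[OF g, of s] by (intro nn_integral_cong_AE) auto
  finally show ?thesis .
qed

lemma one_step_int:
  fixes a b c :: real and G :: "'a \<Rightarrow> ennreal"
  assumes G[measurable]: "G \<in> borel_measurable (F s)" and c: "c < 1/2"
    and X: "\<theta> * Xp \<gamma> a b c < 1"
  shows "(\<integral>\<^sup>+\<omega>. G \<omega> * ennreal (exp (a * RV (s+1) \<omega> + c * ell (s+1) \<omega> + b * sqrt (RV (s+1) \<omega>) * eps (s+1) \<omega>)) \<partial>M)
       = (\<integral>\<^sup>+\<omega>. G \<omega> * ennreal (exp (- 1/2 * ln (1 - 2*c) - \<delta> * wfun (Xp \<gamma> a b c) \<theta> + Th s \<omega> * vfun (Xp \<gamma> a b c) \<theta>)) \<partial>M)"
proof -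
  define X' where "X' = Xp \<gamma> a b c"
  define h :: "(ennreal \<times> real) \<times> real \<Rightarrow> ennreal"
    where "h p = fst (fst p) * ennreal (exp (a * snd (fst p) + c * (snd p - \<gamma> * sqrt (snd (fst p)))\<^sup>2 + b * sqrt (snd (fst p)) * snd p))" for p
  define Z where "Z \<omega> = (G \<omega>, RV (s+1) \<omega>)" for \<omega>
  have GFp: "G \<in> borel_measurable (Fp s)" by (rule meas_F_Fp[OF G])
  have Zm: "Z \<in> measurable (Fp s) (borel \<Otimes>\<^sub>M borel)"
    unfolding Z_def using GFp RV_Fp[of s] by measurable
  have hm: "h \<in> borel_measurable ((borel \<Otimes>\<^sub>M borel) \<Otimes>\<^sub>M lborel)"
    unfolding h_def by measurable
  have GM[measurable]: "G \<in> borel_measurable M" by (rule meas_F_M[OF G])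
  have "(\<integral>\<^sup>+\<omega>. G \<omega> * ennreal (exp (a * RV (s+1) \<omega> + c * ell (s+1) \<omega> + b * sqrt (RV (s+1) \<omega>) * eps (s+1) \<omega>)) \<partial>M)
      = (\<integral>\<^sup>+\<omega>. h (Z \<omega>, eps (s+1) \<omega>) \<partial>M)"
    unfolding h_def Z_def lev_def by simp
  also have "\<dots> = (\<integral>\<^sup>+\<omega>. (\<integral>\<^sup>+e. ennreal (std_normal_density e) * h (Z \<omega>, e) \<partial>lborel) \<partial>M)"
    by (rule indep_int[OF Zm hm])
  also have "\<dots> = (\<integral>\<^sup>+\<omega>. G \<omega> * ennreal (exp (X' * RV (s+1) \<omega>) / sqrt (1 - 2*c)) \<partial>M)"
  proof (intro nn_integral_cong)
    fix \<omega> assume \<omega>: "\<omega> \<in> space M"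
    have x: "RV (s+1) \<omega> \<ge> 0" using RV_pos[OF \<omega>, of "s+1"] by simp
    have "(\<integral>\<^sup>+e. ennreal (std_normal_density e) * h (Z \<omega>, e) \<partial>lborel)
        = (\<integral>\<^sup>+e. G \<omega> * (ennreal (std_normal_density e) * ennreal (exp (a * RV (s+1) \<omega> + c * (e - \<gamma> * sqrt (RV (s+1) \<omega>))\<^sup>2 + b * sqrt (RV (s+1) \<omega>) * e))) \<partial>lborel)"
      unfolding h_def Z_def by (simp add: mult_ac)
    also have "\<dots> = G \<omega> * (\<integral>\<^sup>+e. ennreal (std_normal_density e) * ennreal (exp (a * RV (s+1) \<omega> + c * (e - \<gamma> * sqrt (RV (s+1) \<omega>))\<^sup>2 + b * sqrt (RV (s+1) \<omega>) * e)) \<partial>lborel)"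
      by (rule nn_integral_cmult) measurable
    also have "\<dots> = G \<omega> * ennreal (exp (X' * RV (s+1) \<omega>) / sqrt (1 - 2*c))"
      unfolding X'_def by (simp only: gauss_shift[OF c x])
    finally show "(\<integral>\<^sup>+e. ennreal (std_normal_density e) * h (Z \<omega>, e) \<partial>lborel) = G \<omega> * ennreal (exp (X' * RV (s+1) \<omega>) / sqrt (1 - 2*c))" .
  qed
  also have "\<dots> = (\<integral>\<^sup>+\<omega>. (G \<omega> * ennreal (1 / sqrt (1 - 2*c))) * ennreal (exp (X' * RV (s+1) \<omega>)) \<partial>M)"
  proof (intro nn_integral_cong)
    fix \<omega>
    have eq: "exp (X' * RV (s+1) \<omega>) / sqrt (1 - 2*c) = (1 / sqrt (1 - 2*c)) * exp (X' * RV (s+1) \<omega>)" by simp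
    have nn: "1 / sqrt (1 - 2*c) \<ge> 0" using c by simp
    have "ennreal ((1 / sqrt (1 - 2*c)) * exp (X' * RV (s+1) \<omega>)) = ennreal (1 / sqrt (1 - 2*c)) * ennreal (exp (X' * RV (s+1) \<omega>))"
      by (rule ennreal_mult'[OF nn])
    then have "ennreal (exp (X' * RV (s+1) \<omega>) / sqrt (1 - 2*c)) = ennreal (1 / sqrt (1 - 2*c)) * ennreal (exp (X' * RV (s+1) \<omega>))"
      by (simp only: eq)
    then show "G \<omega> * ennreal (exp (X' * RV (s+1) \<omega>) / sqrt (1 - 2*c)) = G \<omega> * ennreal (1 / sqrt (1 - 2*c)) * ennreal (exp (X' * RV (s+1) \<omega>))"
      by (simp only: mult.assoc)
  qed
  also have "\<dots> = (\<integral>\<^sup>+\<omega>. (G \<omega> * ennreal (1 / sqrt (1 - 2*c))) * (\<integral>\<^sup>+x. ennreal (exp (X' * x)) \<partial>ncgamma \<delta> (Th s \<omega>) \<theta>) \<partial>M)"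
    by (rule cond_law_G) measurable
  also have "\<dots> = (\<integral>\<^sup>+\<omega>. G \<omega> * ennreal (exp (- 1/2 * ln (1 - 2*c) - \<delta> * wfun X' \<theta> + Th s \<omega> * vfun X' \<theta>)) \<partial>M)"
  proof (intro nn_integral_cong)
    fix \<omega> assume \<omega>: "\<omega> \<in> space M"
    have m1: "(\<integral>\<^sup>+x. ennreal (exp (X' * x)) \<partial>ncgamma \<delta> (Th s \<omega>) \<theta>) = ennreal (exp (- \<delta> * wfun X' \<theta> + Th s \<omega> * vfun X' \<theta>))"
      using ncgamma_mgf[of \<delta> \<theta> "Th s \<omega>" X'] params Th_nn[OF \<omega>] X unfolding X'_def by simp
    have m2: "1 / sqrt (1 - 2*c) * exp (- \<delta> * wfun X' \<theta> + Th s \<omega> * vfun X' \<theta>) = exp (- 1/2 * ln (1 - 2*c) - \<delta> * wfun X' \<theta> + Th s \<omega> * vfun X' \<theta>)"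
    proof -
      have e1: "1 / sqrt (1 - 2*c) = exp (- 1/2 * ln (1 - 2*c))"
        using c by (simp add: exp_minus ln_sqrt[symmetric] inverse_eq_divide)
      have e2: "- 1/2 * ln (1 - 2*c) - \<delta> * wfun X' \<theta> + Th s \<omega> * vfun X' \<theta> = (- 1/2 * ln (1 - 2*c)) + (- \<delta> * wfun X' \<theta> + Th s \<omega> * vfun X' \<theta>)"
        by simp
      show ?thesis by (simp only: e1 e2 exp_add)
    qed
    have m3: "ennreal (1 / sqrt (1 - 2*c)) * ennreal (exp (- \<delta> * wfun X' \<theta> + Th s \<omega> * vfun X' \<theta>))
       = ennreal (exp (- 1/2 * ln (1 - 2*c) - \<delta> * wfun X' \<theta> + Th s \<omega> * vfun X' \<theta>))"
    proof -
      have nn: "1 / sqrt (1 - 2*c) \<ge> 0" using c by simp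
      have "ennreal (1 / sqrt (1 - 2*c) * exp (- \<delta> * wfun X' \<theta> + Th s \<omega> * vfun X' \<theta>)) = ennreal (1 / sqrt (1 - 2*c)) * ennreal (exp (- \<delta> * wfun X' \<theta> + Th s \<omega> * vfun X' \<theta>))"
        by (rule ennreal_mult'[OF nn])
      then show ?thesis unfolding m2 by (rule sym)
    qed
    show "G \<omega> * ennreal (1 / sqrt (1 - 2*c)) * (\<integral>\<^sup>+x. ennreal (exp (X' * x)) \<partial>ncgamma \<delta> (Th s \<omega>) \<theta>)
        = G \<omega> * ennreal (exp (- 1/2 * ln (1 - 2*c) - \<delta> * wfun X' \<theta> + Th s \<omega> * vfun X' \<theta>))"
      unfolding m1 mult.assoc m3 ..
  qed
  finally show ?thesis unfolding X'_def .
qed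

end

context lh begin

lemma cond_step:
  fixes a b c :: real and H :: "'a \<Rightarrow> real"
  assumes H[measurable]: "H \<in> borel_measurable (F s)" and c: "c < 1/2"
    and X: "\<theta> * Xp \<gamma> a b c < 1"
  shows "AE \<omega> in M. nn_cond_exp M (F s)
            (\<lambda>\<omega>. ennreal (exp (H \<omega> + a * RV (s+1) \<omega> + c * ell (s+1) \<omega> + b * sqrt (RV (s+1) \<omega>) * eps (s+1) \<omega>))) \<omega>
         = ennreal (exp (H \<omega> - 1/2 * ln (1 - 2*c) - \<delta> * wfun (Xp \<gamma> a b c) \<theta> + Th s \<omega> * vfun (Xp \<gamma> a b c) \<theta>))"
proof -
  interpret S: sigma_finite_subalgebra M "F s" by (rule sfs_F)
  have HM[measurable]: "H \<in> borel_measurable M" by (rule meas_F_M[OF H])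
  have ThF[measurable]: "Th s \<in> borel_measurable (F s)" by (rule Th_F)
  have "AE \<omega> in M. ennreal (exp (H \<omega> - 1/2 * ln (1 - 2*c) - \<delta> * wfun (Xp \<gamma> a b c) \<theta> + Th s \<omega> * vfun (Xp \<gamma> a b c) \<theta>))
      = nn_cond_exp M (F s) (\<lambda>\<omega>. ennreal (exp (H \<omega> + a * RV (s+1) \<omega> + c * ell (s+1) \<omega> + b * sqrt (RV (s+1) \<omega>) * eps (s+1) \<omega>))) \<omega>"
  proof (rule S.nn_cond_exp_charact)
    fix A assume A[measurable]: "A \<in> sets (F s)"
    define G where "G \<omega> = indicator A \<omega> * ennreal (exp (H \<omega>))" for \<omega>
    have G[measurable]: "G \<in> borel_measurable (F s)" unfolding G_def by measurable
    have e1: "ennreal (exp (H \<omega> + a * RV (s+1) \<omega> + c * ell (s+1) \<omega> + b * sqrt (RV (s+1) \<omega>) * eps (s+1) \<omega>)) * indicator A \<omega>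
        = G \<omega> * ennreal (exp (a * RV (s+1) \<omega> + c * ell (s+1) \<omega> + b * sqrt (RV (s+1) \<omega>) * eps (s+1) \<omega>))" for \<omega>
    proof -
      have "exp (H \<omega> + a * RV (s+1) \<omega> + c * ell (s+1) \<omega> + b * sqrt (RV (s+1) \<omega>) * eps (s+1) \<omega>)
          = exp (H \<omega>) * exp (a * RV (s+1) \<omega> + c * ell (s+1) \<omega> + b * sqrt (RV (s+1) \<omega>) * eps (s+1) \<omega>)"
        by (simp only: exp_add[symmetric] add.assoc)
      then show ?thesis unfolding G_def by (simp add: ennreal_mult mult_ac)
    qed
    have e2: "ennreal (exp (H \<omega> - 1/2 * ln (1 - 2*c) - \<delta> * wfun (Xp \<gamma> a b c) \<theta> + Th s \<omega> * vfun (Xp \<gamma> a b c) \<theta>)) * indicator A \<omega>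
        = G \<omega> * ennreal (exp (- 1/2 * ln (1 - 2*c) - \<delta> * wfun (Xp \<gamma> a b c) \<theta> + Th s \<omega> * vfun (Xp \<gamma> a b c) \<theta>))" for \<omega>
    proof -
      have "exp (H \<omega> - 1/2 * ln (1 - 2*c) - \<delta> * wfun (Xp \<gamma> a b c) \<theta> + Th s \<omega> * vfun (Xp \<gamma> a b c) \<theta>)
          = exp (H \<omega>) * exp (- 1/2 * ln (1 - 2*c) - \<delta> * wfun (Xp \<gamma> a b c) \<theta> + Th s \<omega> * vfun (Xp \<gamma> a b c) \<theta>)"
      proof -
        have "H \<omega> - 1/2 * ln (1 - 2*c) - \<delta> * wfun (Xp \<gamma> a b c) \<theta> + Th s \<omega> * vfun (Xp \<gamma> a b c) \<theta>
            = H \<omega> + (- 1/2 * ln (1 - 2*c) - \<delta> * wfun (Xp \<gamma> a b c) \<theta> + Th s \<omega> * vfun (Xp \<gamma> a b c) \<theta>)" by simp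
        then show ?thesis by (simp only: exp_add)
      qed
      then show ?thesis unfolding G_def by (simp add: ennreal_mult mult_ac)
    qed
    show "(\<integral>\<^sup>+\<omega>\<in>A. ennreal (exp (H \<omega> + a * RV (s+1) \<omega> + c * ell (s+1) \<omega> + b * sqrt (RV (s+1) \<omega>) * eps (s+1) \<omega>)) \<partial>M)
        = (\<integral>\<^sup>+\<omega>\<in>A. ennreal (exp (H \<omega> - 1/2 * ln (1 - 2*c) - \<delta> * wfun (Xp \<gamma> a b c) \<theta> + Th s \<omega> * vfun (Xp \<gamma> a b c) \<theta>)) \<partial>M)"
      unfolding e1 e2 by (rule one_step_int[OF G c X])
  next
    show "(\<lambda>\<omega>. ennreal (exp (H \<omega> + a * RV (s+1) \<omega> + c * ell (s+1) \<omega> + b * sqrt (RV (s+1) \<omega>) * eps (s+1) \<omega>))) \<in> borel_measurable M"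
      unfolding lev_def by measurable
    show "(\<lambda>\<omega>. ennreal (exp (H \<omega> - 1/2 * ln (1 - 2*c) - \<delta> * wfun (Xp \<gamma> a b c) \<theta> + Th s \<omega> * vfun (Xp \<gamma> a b c) \<theta>))) \<in> borel_measurable (F s)"
      by measurable
  qed
  then show ?thesis by (auto elim: AE_mp)
qed

lemma Ystar_Xp: "Ystar lam \<nu>1 \<nu>2 = Xp \<gamma> (- \<nu>1 - \<nu>2 * lam) (- \<nu>2) 0"
  unfolding Ystar_def Xp_def by (simp add: power2_eq_square)

lemma den_ae:
  assumes Y: "\<theta> * Ystar lam \<nu>1 \<nu>2 < 1"
  shows "AE \<omega> in M. real_cond_exp M (F s) (\<lambda>\<omega>'. exp (- \<nu>1 * RV (s + 1) \<omega>' - \<nu>2 * logret r lam eps RV (s + 1) \<omega>')) \<omega>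
           = exp (- \<nu>2 * r - \<delta> * wfun (Ystar lam \<nu>1 \<nu>2) \<theta> + Th s \<omega> * vfun (Ystar lam \<nu>1 \<nu>2) \<theta>)"
proof -
  interpret S: sigma_finite_subalgebra M "F s" by (rule sfs_F)
  have fe: "(\<lambda>\<omega>'. ennreal (exp (- \<nu>1 * RV (s + 1) \<omega>' - \<nu>2 * logret r lam eps RV (s + 1) \<omega>')))
     = (\<lambda>\<omega>. ennreal (exp ((\<lambda>_. - \<nu>2 * r) \<omega> + (- \<nu>1 - \<nu>2 * lam) * RV (s+1) \<omega> + 0 * ell (s+1) \<omega> + (- \<nu>2) * sqrt (RV (s+1) \<omega>) * eps (s+1) \<omega>)))"
    unfolding logret_def by (intro ext) (simp add: algebra_simps)
  have c0: "(0::real) < 1/2" by simp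
  have Y': "\<theta> * Xp \<gamma> (- \<nu>1 - \<nu>2 * lam) (- \<nu>2) 0 < 1" using Y unfolding Ystar_Xp[of lam \<nu>1 \<nu>2] .
  have A1: "AE \<omega> in M. nn_cond_exp M (F s) (\<lambda>\<omega>'. ennreal (exp (- \<nu>1 * RV (s + 1) \<omega>' - \<nu>2 * logret r lam eps RV (s + 1) \<omega>'))) \<omega>
      = ennreal (exp (- \<nu>2 * r - \<delta> * wfun (Ystar lam \<nu>1 \<nu>2) \<theta> + Th s \<omega> * vfun (Ystar lam \<nu>1 \<nu>2) \<theta>))"
    unfolding fe using cond_step[OF _ c0 Y', of "\<lambda>_. - \<nu>2 * r"] unfolding Ystar_Xp[of lam \<nu>1 \<nu>2, symmetric] by simp
  have A2: "AE \<omega> in M. nn_cond_exp M (F s) (\<lambda>\<omega>'. ennreal (- exp (- \<nu>1 * RV (s + 1) \<omega>' - \<nu>2 * logret r lam eps RV (s + 1) \<omega>'))) \<omega> = 0"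
  proof -
    have "(\<lambda>\<omega>'. ennreal (- exp (- \<nu>1 * RV (s + 1) \<omega>' - \<nu>2 * logret r lam eps RV (s + 1) \<omega>'))) = (\<lambda>_. 0)"
      by (intro ext) (simp add: ennreal_neg)
    moreover have "AE \<omega> in M. (\<lambda>_. 0::ennreal) \<omega> = nn_cond_exp M (F s) (\<lambda>_. 0) \<omega>"
      by (rule S.nn_cond_exp_F_meas) simp
    ultimately show ?thesis by (auto elim: AE_mp)
  qed
  show ?thesis using A1 A2 unfolding real_cond_exp_def by (auto elim!: AE_mp)
qed

end

lemma sum_split_shift:
  fixes f :: "nat \<Rightarrow> real" and g :: "int \<Rightarrow> real"
  assumes p: "p \<ge> 1"
  shows "(\<Sum>i=1..p. f i * g (t + 1 + 1 - int i))
       = f 1 * g (t+1) + (\<Sum>i=1..p. (if i \<le> p - 1 then f (i+1) else 0) * g (t + 1 - int i))"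
proof -
  obtain p' where pp: "p = Suc p'" using p by (cases p) auto
  have "(\<Sum>i=1..p. f i * g (t + 1 + 1 - int i)) = f 1 * g (t+1) + (\<Sum>i=Suc 1..Suc p'. f i * g (t + 1 + 1 - int i))"
    unfolding pp by (subst sum.atLeast_Suc_atMost) (simp_all add: add.commute)
  also have "(\<Sum>i=Suc 1..Suc p'. f i * g (t + 1 + 1 - int i)) = (\<Sum>i=1..p'. f (Suc i) * g (t + 1 + 1 - int (Suc i)))"
    by (rule sum.shift_bounds_cl_Suc_ivl)
  also have "\<dots> = (\<Sum>i=1..p'. (if i \<le> p - 1 then f (i+1) else 0) * g (t + 1 - int i))"
    unfolding pp by (intro sum.cong) (auto simp: algebra_simps)
  also have "\<dots> = (\<Sum>i=1..p. (if i \<le> p - 1 then f (i+1) else 0) * g (t + 1 - int i))"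
  proof -
    have "(\<Sum>i=1..p. (if i \<le> p - 1 then f (i+1) else 0) * g (t + 1 - int i))
        = (\<Sum>i=1..p'. (if i \<le> p - 1 then f (i+1) else 0) * g (t + 1 - int i)) + (if p \<le> p - 1 then f (p+1) else 0) * g (t + 1 - int p)"
      unfolding pp by (subst sum.cl_ivl_Suc) simp
    then show ?thesis unfolding pp by simp
  qed
  finally show ?thesis .
qed

lemma Xp_Xstar:
  assumes "1 - 2*C \<noteq> 0"
  shows "Xp \<gamma> ((z - \<nu>2) * lam - \<nu>1 + B1) (z - \<nu>2) C = Xstar lam \<gamma> \<nu>1 \<nu>2 z B1 C"
proof -
  have "C * \<gamma>\<^sup>2 + ((z - \<nu>2) - 2*C*\<gamma>)\<^sup>2 / (2*(1 - 2*C)) = (1/2 * (z - \<nu>2)\<^sup>2 + \<gamma>\<^sup>2 * C - 2 * C * \<gamma> * (z - \<nu>2)) / (1 - 2 * C)"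
    using assms by (simp add: field_simps power2_eq_square)
  then show ?thesis unfolding Xp_def Xstar_def by simp
qed

locale lh2 = lh +
  fixes r lam \<nu>1 \<nu>2 z :: real
  assumes Ycond: "\<theta> * Ystar lam \<nu>1 \<nu>2 < 1"
    and pq: "p \<ge> 1" "q \<ge> 1"
begin

abbreviation "Y \<equiv> Ystar lam \<nu>1 \<nu>2"
abbreviation "y u \<equiv> logret r lam eps RV u"

definition sdf' :: "int \<Rightarrow> 'a \<Rightarrow> real" where
  "sdf' u \<omega> = exp (- \<nu>1 * RV (u+1) \<omega> - \<nu>2 * y (u+1) \<omega> + \<nu>2 * r + \<delta> * wfun Y \<theta> - Th u \<omega> * vfun Y \<theta>)"

lemma sdf_ae: "AE \<omega> in M. sdf M r lam \<nu>1 \<nu>2 eps RV u \<omega> = sdf' u \<omega>"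
  using den_ae[OF Ycond, of u r] 
proof (rule AE_mp, intro AE_I2 impI)
  fix \<omega> assume eq: "real_cond_exp M (F u) (\<lambda>\<omega>'. exp (- \<nu>1 * RV (u + 1) \<omega>' - \<nu>2 * y (u + 1) \<omega>')) \<omega>
           = exp (- \<nu>2 * r - \<delta> * wfun Y \<theta> + Th u \<omega> * vfun Y \<theta>)"
  show "sdf M r lam \<nu>1 \<nu>2 eps RV u \<omega> = sdf' u \<omega>"
    unfolding sdf_def eq sdf'_def by (simp add: exp_diff[symmetric] algebra_simps)
qed

definition W :: "nat \<Rightarrow> int \<Rightarrow> 'a \<Rightarrow> real" where
  "W k s \<omega> = (\<Prod>u\<in>{s..<s + int k}. sdf' u \<omega>) * exp (z * (\<Sum>u\<in>{s+1..s + int k}. y u \<omega>))"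

definition E :: "nat \<Rightarrow> int \<Rightarrow> 'a \<Rightarrow> real" where
  "E k s \<omega> = (case coefs r lam \<delta> \<theta> d \<gamma> p q \<beta> \<alpha> \<nu>1 \<nu>2 z k of (A, B, C) \<Rightarrow>
      exp (A + (\<Sum>i=1..p. B i * RV (s + 1 - int i) \<omega>) + (\<Sum>j=1..q. C j * ell (s + 1 - int j) \<omega>)))"

definition cnd :: "nat \<Rightarrow> bool" where
  "cnd k = (case coefs r lam \<delta> \<theta> d \<gamma> p q \<beta> \<alpha> \<nu>1 \<nu>2 z k of (A, B, C) \<Rightarrow>
      1 - 2 * C 1 > 0 \<and> \<theta> * Xstar lam \<gamma> \<nu>1 \<nu>2 z (B 1) (C 1) < 1)"

lemma W_Suc: "W (Suc k) s \<omega> = (sdf' s \<omega> * exp (z * y (s+1) \<omega>)) * W k (s+1) \<omega>"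
proof -
  have I1: "{s..<s + int (Suc k)} = insert s {s+1..<(s+1) + int k}" by auto
  have I2: "{s+1..s + int (Suc k)} = insert (s+1) {(s+1)+1..(s+1) + int k}" by auto
  show ?thesis unfolding W_def I1 I2 by (simp add: distrib_left exp_add mult_ac)
qed

lemma W_meas: "W k s \<in> borel_measurable M"
  unfolding W_def sdf'_def logret_def by measurable

lemma subalg_F1: "subalgebra (F (s+1)) (F s)" by (rule subalg_FF) simp

lemma sdf'_F: "sdf' s \<in> borel_measurable (F (s+1))"
proof -
  have [measurable]: "RV (s+1) \<in> borel_measurable (F (s+1))" "eps (s+1) \<in> borel_measurable (F (s+1))"
    by (auto intro: RV_F eps_F)
  have [measurable]: "Th s \<in> borel_measurable (F (s+1))" by (rule meas_F_mono[OF Th_F]) simp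
  show ?thesis unfolding sdf'_def logret_def by measurable
qed

lemma y_F: "y (s+1) \<in> borel_measurable (F (s+1))"
proof -
  have [measurable]: "RV (s+1) \<in> borel_measurable (F (s+1))" "eps (s+1) \<in> borel_measurable (F (s+1))"
    by (auto intro: RV_F eps_F)
  show ?thesis unfolding logret_def by measurable
qed

lemma W0: "W 0 s \<omega> = 1" unfolding W_def by simp
lemma E0: "E 0 s \<omega> = 1" unfolding E_def by simp

lemma main_ind:
  assumes "\<forall>k'<k. cnd k'"
  shows "AE \<omega> in M. nn_cond_exp M (F s) (\<lambda>\<omega>. ennreal (W k s \<omega>)) \<omega> = ennreal (E k s \<omega>)"
  using assms
proof (induction k arbitrary: s)
  case 0
  interpret S: sigma_finite_subalgebra M "F s" by (rule sfs_F)
  have "AE \<omega> in M. (\<lambda>_. 1::ennreal) \<omega> = nn_cond_exp M (F s) (\<lambda>_. 1) \<omega>"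
    by (rule S.nn_cond_exp_F_meas) simp
  then show ?case unfolding W0 E0 by (auto elim: AE_mp)
next
  case (Suc k)
  have IH: "AE \<omega> in M. nn_cond_exp M (F t) (\<lambda>\<omega>. ennreal (W k t \<omega>)) \<omega> = ennreal (E k t \<omega>)" for t
    using Suc by simp
  have ck: "cnd k" using Suc.prems by simp
  obtain A B C where cf: "coefs r lam \<delta> \<theta> d \<gamma> p q \<beta> \<alpha> \<nu>1 \<nu>2 z k = (A, B, C)" by (cases "coefs r lam \<delta> \<theta> d \<gamma> p q \<beta> \<alpha> \<nu>1 \<nu>2 z k") auto
  have C1: "1 - 2 * C 1 > 0" and Xc: "\<theta> * Xstar lam \<gamma> \<nu>1 \<nu>2 z (B 1) (C 1) < 1"
    using ck unfolding cnd_def cf by simp_all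
  define a where "a = (z - \<nu>2) * lam - \<nu>1 + B 1"
  define b where "b = z - \<nu>2"
  define c where "c = C 1"
  define X where "X = Xstar lam \<gamma> \<nu>1 \<nu>2 z (B 1) (C 1)"
  have XpX: "Xp \<gamma> a b c = X" unfolding a_def b_def c_def X_def by (rule Xp_Xstar) (use C1 in simp)
  have c12: "c < 1/2" unfolding c_def using C1 by simp
  have Xc': "\<theta> * Xp \<gamma> a b c < 1" using Xc unfolding XpX X_def .
  define SB where "SB \<omega> = (\<Sum>i=1..p. (if i \<le> p - 1 then B (i+1) else 0) * RV (s + 1 - int i) \<omega>)" for \<omega>
  define SC where "SC \<omega> = (\<Sum>j=1..q. (if j \<le> q - 1 then C (j+1) else 0) * ell (s + 1 - int j) \<omega>)" for \<omega>
  define H where "H \<omega> = z * r + \<delta> * wfun Y \<theta> - Th s \<omega> * vfun Y \<theta> + A + SB \<omega> + SC \<omega>" for \<omega>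
  define U where "U \<omega> = sdf' s \<omega> * exp (z * y (s+1) \<omega>)" for \<omega>
  have Ecf: "E k t \<omega> = exp (A + (\<Sum>i=1..p. B i * RV (t + 1 - int i) \<omega>) + (\<Sum>j=1..q. C j * ell (t + 1 - int j) \<omega>))" for t \<omega>
    unfolding E_def cf by simp
  have HF: "H \<in> borel_measurable (F s)"
  proof -
    have [measurable]: "Th s \<in> borel_measurable (F s)" by (rule Th_F)
    have [measurable]: "SB \<in> borel_measurable (F s)" unfolding SB_def
      by (intro borel_measurable_sum borel_measurable_times borel_measurable_const RV_F) auto
    have [measurable]: "SC \<in> borel_measurable (F s)" unfolding SC_def
      by (intro borel_measurable_sum borel_measurable_times borel_measurable_const ell_F) auto
    show ?thesis unfolding H_def by measurable
  qed
  have UF: "U \<in> borel_measurable (F (s+1))"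
    using sdf'_F[of s] y_F[of s] unfolding U_def by measurable
  have Unn: "U \<omega> \<ge> 0" for \<omega> unfolding U_def sdf'_def by simp
  have key1: "U \<omega> * E k (s+1) \<omega> = exp (H \<omega> + a * RV (s+1) \<omega> + c * ell (s+1) \<omega> + b * sqrt (RV (s+1) \<omega>) * eps (s+1) \<omega>)" for \<omega>
  proof -
    have sB: "(\<Sum>i=1..p. B i * RV (s + 1 + 1 - int i) \<omega>) = B 1 * RV (s+1) \<omega> + SB \<omega>"
      unfolding SB_def by (rule sum_split_shift[OF pq(1), where g="\<lambda>t. RV t \<omega>"])
    have sC: "(\<Sum>j=1..q. C j * ell (s + 1 + 1 - int j) \<omega>) = C 1 * ell (s+1) \<omega> + SC \<omega>"
      unfolding SC_def by (rule sum_split_shift[OF pq(2), where g="\<lambda>t. ell t \<omega>"])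
    have "U \<omega> * E k (s+1) \<omega> = exp ((- \<nu>1 * RV (s+1) \<omega> - \<nu>2 * y (s+1) \<omega> + \<nu>2 * r + \<delta> * wfun Y \<theta> - Th s \<omega> * vfun Y \<theta>)
          + z * y (s+1) \<omega> + (A + (B 1 * RV (s+1) \<omega> + SB \<omega>) + (C 1 * ell (s+1) \<omega> + SC \<omega>)))"
      unfolding U_def sdf'_def Ecf sB sC by (simp only: exp_add)
    also have "\<dots> = exp (H \<omega> + a * RV (s+1) \<omega> + c * ell (s+1) \<omega> + b * sqrt (RV (s+1) \<omega>) * eps (s+1) \<omega>)"
      unfolding H_def a_def b_def c_def logret_def by (simp add: algebra_simps)
    finally show ?thesis .
  qed
  have key2: "exp (H \<omega> - 1/2 * ln (1 - 2*c) - \<delta> * wfun X \<theta> + Th s \<omega> * vfun X \<theta>) = E (Suc k) s \<omega>" for \<omega>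
  proof -
    define D where "D = vfun X \<theta> - vfun Y \<theta>"
    have cS: "coefs r lam \<delta> \<theta> d \<gamma> p q \<beta> \<alpha> \<nu>1 \<nu>2 z (Suc k) =
       (A + z * r - 1/2 * ln (1 - 2 * C 1) - \<delta> * wfun X \<theta> + \<delta> * wfun Y \<theta> + d * vfun X \<theta> - d * vfun Y \<theta>,
        (\<lambda>i. if 1 \<le> i \<and> i \<le> p then (if i \<le> p - 1 then B (i + 1) else 0) + D * \<beta> i else 0),
        (\<lambda>j. if 1 \<le> j \<and> j \<le> q then (if j \<le> q - 1 then C (j + 1) else 0) + D * \<alpha> j else 0))"
      unfolding X_def D_def by (simp only: coefs.simps cf Let_def prod.case)
    have s1: "(\<Sum>i=1..p. (if 1 \<le> i \<and> i \<le> p then (if i \<le> p - 1 then B (i + 1) else 0) + D * \<beta> i else 0) * RV (s + 1 - int i) \<omega>)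
        = SB \<omega> + D * (\<Sum>i=1..p. \<beta> i * RV (s + 1 - int i) \<omega>)"
      unfolding SB_def by (simp add: sum.distrib sum_distrib_left distrib_right mult.assoc)
    have s2: "(\<Sum>j=1..q. (if 1 \<le> j \<and> j \<le> q then (if j \<le> q - 1 then C (j + 1) else 0) + D * \<alpha> j else 0) * ell (s + 1 - int j) \<omega>)
        = SC \<omega> + D * (\<Sum>j=1..q. \<alpha> j * ell (s + 1 - int j) \<omega>)"
      unfolding SC_def by (simp add: sum.distrib sum_distrib_left distrib_right mult.assoc)
    have "E (Suc k) s \<omega> = exp ((A + z * r - 1/2 * ln (1 - 2 * C 1) - \<delta> * wfun X \<theta> + \<delta> * wfun Y \<theta> + d * vfun X \<theta> - d * vfun Y \<theta>)
        + (SB \<omega> + D * (\<Sum>i=1..p. \<beta> i * RV (s + 1 - int i) \<omega>)) + (SC \<omega> + D * (\<Sum>j=1..q. \<alpha> j * ell (s + 1 - int j) \<omega>)))"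
      unfolding E_def cS prod.case s1 s2 ..
    also have "\<dots> = exp (H \<omega> - 1/2 * ln (1 - 2*c) - \<delta> * wfun X \<theta> + Th s \<omega> * vfun X \<theta>)"
      unfolding H_def c_def D_def Theta_def by (simp add: algebra_simps)
    finally show ?thesis ..
  qed
  interpret S: sigma_finite_subalgebra M "F s" by (rule sfs_F)
  interpret S1: sigma_finite_subalgebra M "F (s+1)" by (rule sfs_F)
  have WM: "(\<lambda>\<omega>. ennreal (W (Suc k) s \<omega>)) \<in> borel_measurable M" using W_meas by measurable
  have N1: "AE \<omega> in M. nn_cond_exp M (F s) (\<lambda>\<omega>. ennreal (W (Suc k) s \<omega>)) \<omega>
      = nn_cond_exp M (F s) (nn_cond_exp M (F (s+1)) (\<lambda>\<omega>. ennreal (W (Suc k) s \<omega>))) \<omega>"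
    by (rule S.nn_cond_exp_nested_subalg[OF subalg_F subalg_F1 WM])
  have UM: "(\<lambda>\<omega>. ennreal (U \<omega>)) \<in> borel_measurable (F (s+1))" using UF by measurable
  have WkM: "(\<lambda>\<omega>. ennreal (W k (s+1) \<omega>)) \<in> borel_measurable M" using W_meas by measurable
  have N2a: "AE \<omega> in M. ennreal (U \<omega>) * nn_cond_exp M (F (s+1)) (\<lambda>\<omega>. ennreal (W k (s+1) \<omega>)) \<omega>
      = nn_cond_exp M (F (s+1)) (\<lambda>\<omega>. ennreal (U \<omega>) * ennreal (W k (s+1) \<omega>)) \<omega>"
    by (rule S1.nn_cond_exp_prod[OF UM WkM])
  have Wsplit: "(\<lambda>\<omega>. ennreal (W (Suc k) s \<omega>)) = (\<lambda>\<omega>. ennreal (U \<omega>) * ennreal (W k (s+1) \<omega>))"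
    unfolding W_Suc U_def[symmetric] using Unn by (intro ext) (simp add: ennreal_mult')
  have N2: "AE \<omega> in M. nn_cond_exp M (F (s+1)) (\<lambda>\<omega>. ennreal (W (Suc k) s \<omega>)) \<omega> = ennreal (U \<omega> * E k (s+1) \<omega>)"
    using N2a IH[of "s+1"] unfolding Wsplit by (auto elim!: AE_mp simp: ennreal_mult'[OF Unn])
  have UEM: "(\<lambda>\<omega>. ennreal (U \<omega> * E k (s+1) \<omega>)) \<in> borel_measurable M"
  proof -
    have "U \<in> borel_measurable M" by (rule measurable_from_subalg[OF subalg_F UF])
    moreover have "E k (s+1) \<in> borel_measurable M" unfolding Ecf[abs_def] lev_def by measurable
    ultimately show ?thesis by measurable
  qed
  have N3: "AE \<omega> in M. nn_cond_exp M (F s) (nn_cond_exp M (F (s+1)) (\<lambda>\<omega>. ennreal (W (Suc k) s \<omega>))) \<omega>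
      = nn_cond_exp M (F s) (\<lambda>\<omega>. ennreal (U \<omega> * E k (s+1) \<omega>)) \<omega>"
    by (rule S.nn_cond_exp_cong[OF N2 borel_measurable_nn_cond_exp2 UEM])
  have N4: "AE \<omega> in M. nn_cond_exp M (F s) (\<lambda>\<omega>. ennreal (U \<omega> * E k (s+1) \<omega>)) \<omega>
      = ennreal (E (Suc k) s \<omega>)"
    using cond_step[OF HF c12 Xc'] unfolding key1[abs_def, symmetric] XpX key2 .
  show ?case using N1 N3 N4 by (auto elim!: AE_mp)
qed

end


context lh2 begin

lemma final_lh2:
  assumes cond: "\<And>k'. k' < nat (T - t) \<Longrightarrow> cnd k'" and tT: "t < T"
  shows "AE \<omega> in M.
     nn_cond_exp M (F t)
       (\<lambda>\<omega>'. ennreal ((\<Prod>s\<in>{t..<T}. sdf M r lam \<nu>1 \<nu>2 eps RV s \<omega>') *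
                      exp (z * (\<Sum>s\<in>{t+1..T}. logret r lam eps RV s \<omega>')))) \<omega>
     = ennreal (E (nat (T - t)) t \<omega>)"
proof -
  interpret S: sigma_finite_subalgebra M "F t" by (rule sfs_F)
  define k where "k = nat (T - t)"
  have Tk: "T = t + int k" unfolding k_def using tT by simp
  have A1: "AE \<omega> in M. \<forall>u\<in>{t..<T}. sdf M r lam \<nu>1 \<nu>2 eps RV u \<omega> = sdf' u \<omega>"
    by (rule AE_finite_allI) (simp_all add: sdf_ae)
  have A2: "AE \<omega> in M. ennreal ((\<Prod>s\<in>{t..<T}. sdf M r lam \<nu>1 \<nu>2 eps RV s \<omega>) *
                      exp (z * (\<Sum>s\<in>{t+1..T}. logret r lam eps RV s \<omega>))) = ennreal (W k t \<omega>)"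
    using A1 by (rule AE_mp) (intro AE_I2 impI, simp add: W_def Tk)
  have m1: "(\<lambda>\<omega>'. ennreal ((\<Prod>s\<in>{t..<T}. sdf M r lam \<nu>1 \<nu>2 eps RV s \<omega>') *
                      exp (z * (\<Sum>s\<in>{t+1..T}. logret r lam eps RV s \<omega>')))) \<in> borel_measurable M"
    unfolding sdf_def logret_def by measurable
  have m2: "(\<lambda>\<omega>. ennreal (W k t \<omega>)) \<in> borel_measurable M" using W_meas by measurable
  have A3: "AE \<omega> in M. nn_cond_exp M (F t)
       (\<lambda>\<omega>'. ennreal ((\<Prod>s\<in>{t..<T}. sdf M r lam \<nu>1 \<nu>2 eps RV s \<omega>') *
                      exp (z * (\<Sum>s\<in>{t+1..T}. logret r lam eps RV s \<omega>')))) \<omega>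
       = nn_cond_exp M (F t) (\<lambda>\<omega>. ennreal (W k t \<omega>)) \<omega>"
    by (rule S.nn_cond_exp_cong[OF A2 m1 m2])
  have A4: "AE \<omega> in M. nn_cond_exp M (F t) (\<lambda>\<omega>. ennreal (W k t \<omega>)) \<omega> = ennreal (E k t \<omega>)"
    by (rule main_ind) (use cond in \<open>simp add: k_def\<close>)
  show ?thesis using A3 A4 unfolding k_def by (auto elim!: AE_mp)
qed

end

theorem corollary1:
  fixes M :: "'a measure"
    and eps RV :: "int \<Rightarrow> 'a \<Rightarrow> real"
    and r lam \<delta> \<theta> d \<gamma> \<nu>1 \<nu>2 z :: real
    and p q :: nat
    and \<beta> \<alpha> :: "nat \<Rightarrow> real"
    and t T :: int
  assumes prob: "prob_space M"
    and eps_meas: "\<And>u. eps u \<in> borel_measurable M"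
    and RV_meas: "\<And>u. RV u \<in> borel_measurable M"
    and RV_pos: "\<And>u \<omega>. \<omega> \<in> space M \<Longrightarrow> RV u \<omega> > 0"
    and params: "\<delta> > 0" "\<theta> > 0" "d \<ge> 0" "p \<ge> 1" "q \<ge> 1"
    and beta_nn: "\<And>i. 1 \<le> i \<Longrightarrow> i \<le> p \<Longrightarrow> \<beta> i \<ge> 0"
    and alpha_nn: "\<And>j. 1 \<le> j \<Longrightarrow> j \<le> q \<Longrightarrow> \<alpha> j \<ge> 0"
    \<comment> \<open>eps i.i.d. N(0,1)\<close>
    and eps_normal: "\<And>u. distributed M lborel (eps u) std_normal_density"
    and eps_indep: "prob_space.indep_vars M (\<lambda>_. borel) eps UNIV"
    \<comment> \<open>eps_{s+1} independent of (F_s, RV_{s+1})\<close>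
    and eps_indep_past: "\<And>s. prob_space.indep_set M (gen_sets M (eps (s + 1)))
                                   (sets (filt_plus M eps RV s))"
    \<comment> \<open>conditionally on F_s, RV_{s+1} ~ noncentral gamma(delta, Theta_s, theta)\<close>
    and RV_cond_law: "\<And>s B. B \<in> sets borel \<Longrightarrow>
        AE \<omega> in M. real_cond_exp M (filt M eps RV s) (\<lambda>\<omega>'. indicator B (RV (s + 1) \<omega>')) \<omega>
                   = measure (ncgamma \<delta> (Theta d p q \<beta> \<alpha> \<gamma> eps RV s \<omega>) \<theta>) B"
    and tT: "t < T"
    and Ycond: "\<theta> * Ystar lam \<nu>1 \<nu>2 < 1"
    and Xcond: "\<And>k. k < nat (T - t) \<Longrightarrow>
        (let (A, B, C) = coefs r lam \<delta> \<theta> d \<gamma> p q \<beta> \<alpha> \<nu>1 \<nu>2 z k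
         in 1 - 2 * C 1 > 0 \<and> \<theta> * Xstar lam \<gamma> \<nu>1 \<nu>2 z (B 1) (C 1) < 1)"
  shows "AE \<omega> in M.
     nn_cond_exp M (filt M eps RV t)
       (\<lambda>\<omega>'. ennreal ((\<Prod>s\<in>{t..<T}. sdf M r lam \<nu>1 \<nu>2 eps RV s \<omega>') *
                      exp (z * (\<Sum>s\<in>{t+1..T}. logret r lam eps RV s \<omega>')))) \<omega>
     = ennreal (let (A, B, C) = coefs r lam \<delta> \<theta> d \<gamma> p q \<beta> \<alpha> \<nu>1 \<nu>2 z (nat (T - t))
                in exp (A + (\<Sum>i=1..p. B i * RV (t + 1 - int i) \<omega>)
                          + (\<Sum>j=1..q. C j * lev \<gamma> eps RV (t + 1 - int j) \<omega>)))"
proof -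
  have L0: "lh M eps RV \<delta> \<theta> d \<gamma> p q \<beta> \<alpha>"
    by (rule lh.intro) (fact assms)+
  interpret L: lh2 M eps RV \<delta> \<theta> d \<gamma> p q \<beta> \<alpha> r lam \<nu>1 \<nu>2 z
    by (rule lh2.intro[OF L0], rule lh2_axioms.intro) (fact assms)+
  have cond: "L.cnd k'" if "k' < nat (T - t)" for k'
    using Xcond[OF that] unfolding L.cnd_def Let_def by simp
  have "AE \<omega> in M.
     nn_cond_exp M (filt M eps RV t)
       (\<lambda>\<omega>'. ennreal ((\<Prod>s\<in>{t..<T}. sdf M r lam \<nu>1 \<nu>2 eps RV s \<omega>') *
                      exp (z * (\<Sum>s\<in>{t+1..T}. logret r lam eps RV s \<omega>')))) \<omega>
     = ennreal (L.E (nat (T - t)) t \<omega>)"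
    by (rule L.final_lh2[OF cond tT])
  then show ?thesis unfolding L.E_def Let_def .
qed


end
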